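(* Let $N\ge3$. For every marginal distribution $F$ as in the context, the Second Price Auction with $\mathrm{Beta}(\frac1{N-1},1)$ Distributed Reserves is not a maxmin auction among (all, not necessarily exclusive) DSIC and EPIR mechanisms.
   Context: A single indivisible good is sold to $N$ bidders with private values $v_i\in[0,1]$, each with the same marginal cdf $F$ on $[0,1]$ with support $[0,1]$. $\Pi(F)$ is the set of probability measures on $[0,1]^N$ with all one-dimensional marginals $F$. A mechanism $(q,t)$: $q:[0,1]^N\to[0,1]^N$ with $\sum_iq_i\le1$, $t:[0,1]^N\to\mathbb{R}^N$; DSIC: $v_iq_i(v)-t_i(v)\ge v_iq_i(v_i',v_{-i})-t_i(v_i',v_{-i})$ for all $i,v,v_i'$; EPIR: $v_iq_i(v)-t_i(v)\ge0$. A maxmin auction maximizes $\inf_{\pi\in\Pi(F)}\int\sum_it_i\,d\pi$ over the class of DSIC and EPIR mechanisms. Second Price Auction with $\mathrm{Beta}(\frac1{N-1},1)$ Distributed Reserves: with $v_{(1)},v_{(2)}$ the highest and second highest values, a unique highest bidder gets the good with probability $v_{(1)}^{1/(N-1)}$ and pays $\frac1Nv_{(1)}^{N/(N-1)}+\frac{N-1}Nv_{(2)}^{N/(N-1)}$; if $K\ge2$ bidders tie at $v_{(1)}$, each gets probability $v_{(1)}^{1/(N-1)}/K$ and pays $v_{(1)}^{N/(N-1)}/K$; all others get and pay nothing. *)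

theory Defs
  imports "HOL-Probability.Probability"
begin

definition profiles :: "nat \<Rightarrow> (nat \<Rightarrow> real) set" where
  "profiles N = PiE {..<N} (\<lambda>_. {0..1})"

definition profile_space :: "nat \<Rightarrow> (nat \<Rightarrow> real) measure" where
  "profile_space N = PiM {..<N} (\<lambda>_. borel)"

definition cdf_on_unit_with_full_support :: "(real \<Rightarrow> real) \<Rightarrow> bool" where
  "cdf_on_unit_with_full_support F \<longleftrightarrow>
     mono F \<and> (\<forall>x. continuous (at_right x) F) \<and>
     (\<forall>x<0. F x = 0) \<and> (\<forall>x\<ge>1. F x = 1) \<and>
     (\<forall>x\<in>{0..1}. \<forall>e>0. F (x - e) < F (x + e))"

definition Pi_F :: "nat \<Rightarrow> (real \<Rightarrow> real) \<Rightarrow> (nat \<Rightarrow> real) measure set" where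
  "Pi_F N F = {\<pi>. prob_space \<pi> \<and> sets \<pi> = sets (profile_space N) \<and>
     (\<forall>i<N. \<forall>x. measure \<pi> {v \<in> space \<pi>. v i \<le> x} = F x)}"

definition feasible ::
  "nat \<Rightarrow> ((nat \<Rightarrow> real) \<Rightarrow> nat \<Rightarrow> real) \<Rightarrow> bool" where
  "feasible N q \<longleftrightarrow> (\<forall>v\<in>profiles N.
     (\<forall>i<N. 0 \<le> q v i \<and> q v i \<le> 1) \<and> (\<Sum>i<N. q v i) \<le> 1)"

definition DSIC ::
  "nat \<Rightarrow> ((nat \<Rightarrow> real) \<Rightarrow> nat \<Rightarrow> real) \<Rightarrow> ((nat \<Rightarrow> real) \<Rightarrow> nat \<Rightarrow> real) \<Rightarrow> bool" where
  "DSIC N q t \<longleftrightarrow> (\<forall>v\<in>profiles N. \<forall>i<N. \<forall>w\<in>{0..1}.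
     v i * q v i - t v i \<ge> v i * q (v(i := w)) i - t (v(i := w)) i)"

definition EPIR ::
  "nat \<Rightarrow> ((nat \<Rightarrow> real) \<Rightarrow> nat \<Rightarrow> real) \<Rightarrow> ((nat \<Rightarrow> real) \<Rightarrow> nat \<Rightarrow> real) \<Rightarrow> bool" where
  "EPIR N q t \<longleftrightarrow> (\<forall>v\<in>profiles N. \<forall>i<N. v i * q v i - t v i \<ge> 0)"

definition admissible ::
  "nat \<Rightarrow> ((nat \<Rightarrow> real) \<Rightarrow> nat \<Rightarrow> real) \<Rightarrow> ((nat \<Rightarrow> real) \<Rightarrow> nat \<Rightarrow> real) \<Rightarrow> bool" where
  "admissible N q t \<longleftrightarrow> feasible N q \<and> DSIC N q t \<and> EPIR N q t \<and>
     (\<forall>i<N. (\<lambda>v. q v i) \<in> borel_measurable (profile_space N) \<and>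
            (\<lambda>v. t v i) \<in> borel_measurable (profile_space N))"

definition revenue ::
  "nat \<Rightarrow> ((nat \<Rightarrow> real) \<Rightarrow> nat \<Rightarrow> real) \<Rightarrow> (nat \<Rightarrow> real) measure \<Rightarrow> real" where
  "revenue N t \<pi> = (\<integral>v. (\<Sum>i<N. t v i) \<partial>\<pi>)"

text \<open>Worst-case expected revenue, in the extended reals (so that an
  unbounded-below family of revenues gives -\<infinity>).\<close>
definition worst_revenue ::
  "nat \<Rightarrow> (real \<Rightarrow> real) \<Rightarrow> ((nat \<Rightarrow> real) \<Rightarrow> nat \<Rightarrow> real) \<Rightarrow> ereal" where
  "worst_revenue N F t = (INF \<pi>\<in>Pi_F N F. ereal (revenue N t \<pi>))"

text \<open>Second price auction with Beta(1/(N-1),1) distributed reserves.\<close>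
definition top_val :: "nat \<Rightarrow> (nat \<Rightarrow> real) \<Rightarrow> real" where
  "top_val N v = Max (v ` {..<N})"

definition n_top :: "nat \<Rightarrow> (nat \<Rightarrow> real) \<Rightarrow> nat" where
  "n_top N v = card {j. j < N \<and> v j = top_val N v}"

definition second_val :: "nat \<Rightarrow> (nat \<Rightarrow> real) \<Rightarrow> nat \<Rightarrow> real" where
  "second_val N v i = Max (v ` ({..<N} - {i}))"

definition spa_q :: "nat \<Rightarrow> (nat \<Rightarrow> real) \<Rightarrow> nat \<Rightarrow> real" where
  "spa_q N v i =
     (if i < N \<and> v i = top_val N v then
        top_val N v powr (1 / (real N - 1)) / real (n_top N v)
      else 0)"

definition spa_t :: "nat \<Rightarrow> (nat \<Rightarrow> real) \<Rightarrow> nat \<Rightarrow> real" where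
  "spa_t N v i =
     (if i < N \<and> v i = top_val N v then
        (if n_top N v = 1 then
           1 / real N * top_val N v powr (real N / (real N - 1))
           + (real N - 1) / real N * second_val N v i powr (real N / (real N - 1))
         else top_val N v powr (real N / (real N - 1)) / real (n_top N v))
      else 0)"

end

theory Submission
  imports Defs
begin

lemma young_aux:
  fixes x y p :: real
  assumes "0 \<le> x" "0 \<le> y" "0 < p"
  shows "(1 + p) * (x * y powr p) \<le> x powr (1 + p) + p * y powr (1 + p)"
proof -
  have "x * y powr p \<le> x powr (1 + p) / (1 + p) + (y powr p) powr ((1 + p) / p) / ((1 + p) / p)"
    by (rule Youngs_inequality) (use assms in \<open>auto simp: field_simps\<close>)
  also have "(y powr p) powr ((1 + p) / p) = y powr (1 + p)"
    using assms by (simp add: powr_powr)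
  also have "y powr (1 + p) / ((1 + p) / p) = p * y powr (1 + p) / (1 + p)"
    using assms by (simp add: field_simps)
  finally have "x * y powr p \<le> (x powr (1 + p) + p * y powr (1 + p)) / (1 + p)"
    by (simp add: add_divide_distrib)
  then show ?thesis using assms by (simp add: field_simps)
qed

lemma powr_one_plus:
  fixes x p :: real
  assumes "0 \<le> x"
  shows "x powr (1 + p) = x * x powr p"
  using assms by (cases "x = 0") (auto simp: powr_add)

lemma powr_tangent_lower:
  fixes x y p :: real
  assumes "0 \<le> x" "x \<le> y" "0 < p"
  shows "(y - x) * x powr p \<le> (y powr (1 + p) - x powr (1 + p)) / (1 + p)"
proof -
  have "(1 + p) * (y * x powr p) \<le> y powr (1 + p) + p * x powr (1 + p)"
    using young_aux[of y x p] assms by auto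
  then have "(1 + p) * ((y - x) * x powr p) \<le> y powr (1 + p) - x powr (1 + p)"
    using assms by (simp add: powr_one_plus[of x p] algebra_simps)
  then show ?thesis using assms by (simp add: field_simps)
qed

lemma powr_tangent_upper:
  fixes x y p :: real
  assumes "0 \<le> x" "x \<le> y" "0 < p"
  shows "(y powr (1 + p) - x powr (1 + p)) / (1 + p) \<le> (y - x) * y powr p"
proof -
  have "(1 + p) * (x * y powr p) \<le> x powr (1 + p) + p * y powr (1 + p)"
    using young_aux[of x y p] assms by auto
  then have "y powr (1 + p) - x powr (1 + p) \<le> (1 + p) * ((y - x) * y powr p)"
    using assms by (simp add: powr_one_plus[of y p] algebra_simps)
  then show ?thesis using assms by (simp add: field_simps)
qed

lemma one_minus_powr_ge:
  fixes x p :: real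
  assumes "0 \<le> x" "x \<le> 1" "0 < p" "p \<le> 1"
  shows "p * (1 - x) \<le> 1 - x powr p"
proof -
  show ?thesis
  proof (cases "p = 1")
    case True then show ?thesis using assms by simp
  next
    case False
    then have pl: "p < 1" using assms by auto
    have q: "1/p - 1 > 0" using pl assms by (simp add: field_simps)
    have "(1 + (1/p - 1)) * (x powr p * 1 powr (1/p - 1)) \<le> (x powr p) powr (1 + (1/p - 1)) + (1/p - 1) * 1 powr (1 + (1/p - 1))"
      using young_aux[of "x powr p" 1 "1/p - 1"] q assms by auto
    moreover have "(x powr p) powr (1 + (1/p - 1)) = x"
      using assms by (simp add: powr_powr)
    ultimately have "(1/p) * x powr p \<le> x + (1/p - 1)" by simp
    then have "x powr p \<le> p * x + (1 - p)" using assms by (simp add: field_simps)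
    then show ?thesis by (simp add: algebra_simps)
  qed
qed

section \<open>A generic one-dimensional allocation family\<close>

definition fT :: "real \<Rightarrow> real \<Rightarrow> real \<Rightarrow> real" where
  "fT p k u = u powr p - k * (1 - u)"

definition fJ :: "real \<Rightarrow> real \<Rightarrow> real \<Rightarrow> real \<Rightarrow> real" where
  "fJ p m k u = (u powr (1 + p) - m powr (1 + p)) / (1 + p) + k * ((1 - u)^2 - (1 - m)^2) / 2"

definition fQ :: "real \<Rightarrow> real \<Rightarrow> real \<Rightarrow> real \<Rightarrow> real \<Rightarrow> real \<Rightarrow> real \<Rightarrow> real" where
  "fQ p s m c th k u = (if u < m then (if s \<le> u then c else 0) else if u = m then th else fT p k u)"

definition fI :: "real \<Rightarrow> real \<Rightarrow> real \<Rightarrow> real \<Rightarrow> real \<Rightarrow> real \<Rightarrow> real \<Rightarrow> real" where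
  "fI p s m c th k u = (if u < m then (if s \<le> u then (u - s) * c else 0) else (m - s) * c + fJ p m k u)"

definition fam_ok :: "real \<Rightarrow> real \<Rightarrow> real \<Rightarrow> real \<Rightarrow> real \<Rightarrow> real \<Rightarrow> bool" where
  "fam_ok p s m c th k \<longleftrightarrow> 0 < p \<and> 0 \<le> s \<and> s \<le> m \<and> 0 \<le> c \<and> c \<le> th \<and> th \<le> fT p k m \<and> 0 \<le> k"

lemma fT_mono:
  assumes "0 \<le> x" "x \<le> y" "0 < p" "0 \<le> k"
  shows "fT p k x \<le> fT p k y"
proof -
  have "x powr p \<le> y powr p" using assms by (intro powr_mono2) auto
  moreover have "k * (1 - y) \<le> k * (1 - x)" using assms by (intro mult_left_mono) auto
  ultimately show ?thesis unfolding fT_def by linarith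
qed

lemma fJ_incr:
  assumes "0 \<le> m" "m \<le> x" "x \<le> y" "0 < p" "0 \<le> k"
  shows "(y - x) * fT p k x \<le> fJ p m k y - fJ p m k x"
    and "fJ p m k y - fJ p m k x \<le> (y - x) * fT p k y"
proof -
  have d: "fJ p m k y - fJ p m k x = (y powr (1 + p) - x powr (1 + p)) / (1 + p) + k * ((1 - y)^2 - (1 - x)^2) / 2"
    unfolding fJ_def by (simp add: diff_divide_distrib algebra_simps)
  have e: "(1 - y)^2 - (1 - x)^2 = - ((y - x) * (2 - x - y))"
    by (simp add: power2_eq_square algebra_simps)
  have l1: "(y - x) * x powr p \<le> (y powr (1 + p) - x powr (1 + p)) / (1 + p)"
    using powr_tangent_lower[of x y p] assms by auto
  have u1: "(y powr (1 + p) - x powr (1 + p)) / (1 + p) \<le> (y - x) * y powr p"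
    using powr_tangent_upper[of x y p] assms by auto
  have l2: "- ((y - x) * (1 - x)) \<le> - ((y - x) * (2 - x - y)) / 2"
  proof -
    have "(y - x) * (2 - x - y) \<le> (y - x) * (2 * (1 - x))"
      using assms by (intro mult_left_mono) auto
    then show ?thesis by (simp add: algebra_simps)
  qed
  have u2: "- ((y - x) * (2 - x - y)) / 2 \<le> - ((y - x) * (1 - y))"
  proof -
    have "(y - x) * (2 * (1 - y)) \<le> (y - x) * (2 - x - y)"
      using assms by (intro mult_left_mono) auto
    moreover have "(y - x) * (2 * (1 - y)) = 2 * ((y - x) * (1 - y))" by simp
    ultimately show ?thesis by linarith
  qed
  have l2': "k * (- ((y - x) * (1 - x))) \<le> k * (- ((y - x) * (2 - x - y)) / 2)"
    using l2 assms by (intro mult_left_mono) auto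
  have u2': "k * (- ((y - x) * (2 - x - y)) / 2) \<le> k * (- ((y - x) * (1 - y)))"
    using u2 assms by (intro mult_left_mono) auto
  have eqJ: "fJ p m k y - fJ p m k x = (y powr (1 + p) - x powr (1 + p)) / (1 + p) + k * (- ((y - x) * (2 - x - y)) / 2)"
    using d e by simp
  have eqL: "(y - x) * fT p k x = (y - x) * x powr p + k * (- ((y - x) * (1 - x)))"
    by (simp add: fT_def algebra_simps)
  have eqU: "(y - x) * fT p k y = (y - x) * y powr p + k * (- ((y - x) * (1 - y)))"
    by (simp add: fT_def algebra_simps)
  show "(y - x) * fT p k x \<le> fJ p m k y - fJ p m k x"
    unfolding eqJ eqL using l1 l2' by linarith
  show "fJ p m k y - fJ p m k x \<le> (y - x) * fT p k y"
    unfolding eqJ eqU using u1 u2' by linarith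
qed

lemma fJ_m: "fJ p m k m = 0"
  by (simp add: fJ_def)

lemma fam_incr:
  assumes ok: "fam_ok p s m c th k" and x: "0 \<le> x" "x \<le> y"
  shows "(y - x) * fQ p s m c th k x \<le> fI p s m c th k y - fI p s m c th k x"
    and "fI p s m c th k y - fI p s m c th k x \<le> (y - x) * fQ p s m c th k y"
proof -
  from ok have p: "0 < p" and s0: "0 \<le> s" and sm: "s \<le> m" and c0: "0 \<le> c" and cth: "c \<le> th"
    and thT: "th \<le> fT p k m" and k0: "0 \<le> k" by (auto simp: fam_ok_def)
  have m0: "0 \<le> m" using s0 sm by simp
  have Jb: "(b - a) * fT p k a \<le> fJ p m k b - fJ p m k a \<and> fJ p m k b - fJ p m k a \<le> (b - a) * fT p k b"
    if "m \<le> a" "a \<le> b" for a b using fJ_incr[of m a b p k] that m0 p k0 by auto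
  have Tm: "th \<le> fT p k b" if "m \<le> b" for b using fT_mono[of m b p k] that thT m0 p k0 by auto
  have Jy: "(b - m) * th \<le> fJ p m k b \<and> fJ p m k b \<le> (b - m) * fT p k b" if "m \<le> b" for b
  proof -
    have "(b - m) * th \<le> (b - m) * fT p k m" using that thT by (intro mult_left_mono) auto
    then show ?thesis using Jb[of m b] that fJ_m[of p m k] by auto
  qed
  let ?Q = "fQ p s m c th k" and ?I = "fI p s m c th k"
  have "(y - x) * ?Q x \<le> ?I y - ?I x \<and> ?I y - ?I x \<le> (y - x) * ?Q y"
  proof (cases "y < m")
    case True
    then have xm: "x < m" using x by auto
    show ?thesis
    proof (cases "s \<le> x")
      case True
      then show ?thesis using xm \<open>y < m\<close> x by (simp add: fQ_def fI_def algebra_simps)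
    next
      case False
      show ?thesis
      proof (cases "s \<le> y")
        case True
        have "(y - s) * c \<le> (y - x) * c" using False c0 by (intro mult_right_mono) auto
        moreover have "0 \<le> (y - s) * c" using True c0 by simp
        ultimately show ?thesis using False True xm \<open>y < m\<close> by (simp add: fQ_def fI_def)
      next
        case False
        then show ?thesis using \<open>\<not> s \<le> x\<close> xm \<open>y < m\<close> by (simp add: fQ_def fI_def)
      qed
    qed
  next
    case False
    then have ym: "m \<le> y" by simp
    show ?thesis
    proof (cases "x < m")
      case True
      have Iy: "?I y = (m - s) * c + fJ p m k y" using ym by (simp add: fI_def)
      have QyT: "?Q y \<le> fT p k y \<and> th \<le> ?Q y"
        using ym Tm[of y] by (auto simp: fQ_def)
      have lower: "(y - x) * ?Q x \<le> ?I y - ?I x"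
      proof (cases "s \<le> x")
        case True
        have "(y - m) * c \<le> (y - m) * th" using ym cth by (intro mult_left_mono) auto
        then show ?thesis using True \<open>x < m\<close> Iy Jy[OF ym] by (simp add: fQ_def fI_def algebra_simps)
      next
        case False
        have "0 \<le> (m - s) * c" using sm c0 by simp
        moreover have "0 \<le> (y - m) * th" using ym cth c0 by simp
        ultimately show ?thesis using False \<open>x < m\<close> Iy Jy[OF ym] by (simp add: fQ_def fI_def)
      qed
      have upper: "?I y - ?I x \<le> (y - x) * ?Q y"
      proof (cases "y = m")
        case True
        have "?I y - ?I x \<le> (m - x) * c"
        proof (cases "s \<le> x")
          case True
          then show ?thesis using \<open>x < m\<close> \<open>y = m\<close> by (simp add: fI_def fJ_m algebra_simps)
        next
          case False
          have "(m - s) * c \<le> (m - x) * c" using False c0 by (intro mult_right_mono) auto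
          then show ?thesis using False \<open>x < m\<close> \<open>y = m\<close> by (simp add: fI_def fJ_m)
        qed
        also have "\<dots> \<le> (m - x) * th" using \<open>x < m\<close> cth by (intro mult_left_mono) auto
        finally show ?thesis using True by (simp add: fQ_def)
      next
        case False
        then have ym': "m < y" using ym by simp
        have Qy: "?Q y = fT p k y" using ym' by (simp add: fQ_def)
        have "?I y - ?I x \<le> (m - x) * c + fJ p m k y"
        proof (cases "s \<le> x")
          case True
          then show ?thesis using \<open>x < m\<close> Iy by (simp add: fI_def algebra_simps)
        next
          case False
          have "(m - s) * c \<le> (m - x) * c" using False c0 by (intro mult_right_mono) auto
          then show ?thesis using False \<open>x < m\<close> Iy by (simp add: fI_def)
        qed
        also have "(m - x) * c \<le> (m - x) * fT p k y"
          using \<open>x < m\<close> cth Tm[of y] ym by (intro mult_left_mono) auto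
        finally show ?thesis using Jy[OF ym] Qy by (simp add: algebra_simps)
      qed
      show ?thesis using lower upper by simp
    next
      case False
      then have xm: "m \<le> x" by simp
      have Ixy: "?I y - ?I x = fJ p m k y - fJ p m k x"
        using xm ym by (simp add: fI_def)
      have lower: "(y - x) * ?Q x \<le> fJ p m k y - fJ p m k x"
      proof -
        have "?Q x \<le> fT p k x" using xm Tm[of x] by (auto simp: fQ_def)
        then have "(y - x) * ?Q x \<le> (y - x) * fT p k x" using x by (intro mult_left_mono) auto
        then show ?thesis using Jb[OF xm x(2)] by simp
      qed
      have upper: "fJ p m k y - fJ p m k x \<le> (y - x) * ?Q y"
      proof (cases "y = m")
        case True
        then have "x = y" using xm x by simp
        then show ?thesis by simp
      next
        case False
        then have "?Q y = fT p k y" using ym by (simp add: fQ_def)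
        then show ?thesis using Jb[OF xm x(2)] by simp
      qed
      show ?thesis using Ixy lower upper by simp
    qed
  qed
  then show "(y - x) * ?Q x \<le> ?I y - ?I x" and "?I y - ?I x \<le> (y - x) * ?Q y" by auto
qed

lemma fam_IC:
  assumes ok: "fam_ok p s m c th k" and "0 \<le> u" "0 \<le> w"
  shows "fI p s m c th k w + (u - w) * fQ p s m c th k w \<le> fI p s m c th k u"
proof (cases "w \<le> u")
  case True
  then show ?thesis using fam_incr(1)[OF ok \<open>0 \<le> w\<close> True] by simp
next
  case False
  then show ?thesis using fam_incr(2)[OF ok \<open>0 \<le> u\<close>, of w] by (simp add: algebra_simps)
qed

lemma fam_Q_bounds:
  assumes ok: "fam_ok p s m c th k" and "0 \<le> u"
  shows "0 \<le> fQ p s m c th k u" "fQ p s m c th k u \<le> max th (fT p k u)"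
proof -
  from ok have p: "0 < p" and s0: "0 \<le> s" and sm: "s \<le> m" and c0: "0 \<le> c" and cth: "c \<le> th"
    and thT: "th \<le> fT p k m" and k0: "0 \<le> k" by (auto simp: fam_ok_def)
  have "th \<le> fT p k u" if "m \<le> u" using fT_mono[of m u p k] that thT s0 sm p k0 by auto
  then show "0 \<le> fQ p s m c th k u" using c0 cth by (auto simp: fQ_def)
  show "fQ p s m c th k u \<le> max th (fT p k u)" using cth c0 by (auto simp: fQ_def)
qed

lemma fam_I_nonneg:
  assumes ok: "fam_ok p s m c th k" and "0 \<le> u"
  shows "0 \<le> fI p s m c th k u"
proof -
  have "fI p s m c th k 0 = 0"
  proof -
    from ok have "0 \<le> s" "s \<le> m" by (auto simp: fam_ok_def)
    then show ?thesis by (cases "0 < m"; cases "s = 0") (auto simp: fI_def fJ_m)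
  qed
  moreover have "u * fQ p s m c th k 0 \<le> fI p s m c th k u - fI p s m c th k 0"
    using fam_incr(1)[OF ok, of 0 u] assms by simp
  moreover have "0 \<le> fQ p s m c th k 0" using fam_Q_bounds(1)[OF ok] by simp
  ultimately show ?thesis using assms by (smt (verit) mult_nonneg_nonneg)
qed

section \<open>The mechanism\<close>

definition pN :: "nat \<Rightarrow> real" where "pN N = 1 / (real N - 1)"
definition g1 :: "nat \<Rightarrow> real \<Rightarrow> real" where
  "g1 N dl = dl powr pN N / (4 * real N * (real N - 1))"
definition k0 :: "nat \<Rightarrow> real \<Rightarrow> real" where "k0 N dl = g1 N dl / 2"

definition mx :: "nat \<Rightarrow> (nat \<Rightarrow> real) \<Rightarrow> nat \<Rightarrow> real" where
  "mx N v i = Max (v ` ({..<N} - {i}))"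
definition sx :: "nat \<Rightarrow> (nat \<Rightarrow> real) \<Rightarrow> nat \<Rightarrow> real" where
  "sx N v i = Min ((\<lambda>j. Max (v ` ({..<N} - {i, j}))) ` ({..<N} - {i}))"
definition kx :: "nat \<Rightarrow> (nat \<Rightarrow> real) \<Rightarrow> nat \<Rightarrow> real" where
  "kx N v i = 1 + (\<Sum>j\<in>{..<N} - {i}. if v j = mx N v i then 1 else 0)"

definition prs :: "nat \<Rightarrow> real \<Rightarrow> real \<Rightarrow> real \<Rightarrow> real" where
  "prs N dl m s = (if dl \<le> s then s else if dl \<le> m then s else dl)"
definition prm :: "nat \<Rightarrow> real \<Rightarrow> real \<Rightarrow> real \<Rightarrow> real" where
  "prm N dl m s = (if dl \<le> s then m else if dl \<le> m then m else dl)"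
definition prc :: "nat \<Rightarrow> real \<Rightarrow> real \<Rightarrow> real \<Rightarrow> real" where
  "prc N dl m s = (if dl \<le> s then g1 N dl * (1 - m) else 0)"
definition prth :: "nat \<Rightarrow> real \<Rightarrow> real \<Rightarrow> real \<Rightarrow> real \<Rightarrow> real" where
  "prth N dl m s K = (if dl \<le> s then fT (pN N) (k0 N dl) m * (2 - fT (pN N) (k0 N dl) m) / K
     else if dl \<le> m then m powr pN N / K else dl powr pN N)"
definition prk :: "nat \<Rightarrow> real \<Rightarrow> real \<Rightarrow> real \<Rightarrow> real" where
  "prk N dl m s = (if dl \<le> s then k0 N dl else 0)"

definition slQ :: "nat \<Rightarrow> real \<Rightarrow> real \<Rightarrow> real \<Rightarrow> real \<Rightarrow> real \<Rightarrow> real" where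
  "slQ N dl m s K u = fQ (pN N) (prs N dl m s) (prm N dl m s) (prc N dl m s) (prth N dl m s K) (prk N dl m s) u"
definition slI :: "nat \<Rightarrow> real \<Rightarrow> real \<Rightarrow> real \<Rightarrow> real \<Rightarrow> real \<Rightarrow> real" where
  "slI N dl m s K u = fI (pN N) (prs N dl m s) (prm N dl m s) (prc N dl m s) (prth N dl m s K) (prk N dl m s) u"

definition mq :: "nat \<Rightarrow> real \<Rightarrow> (nat \<Rightarrow> real) \<Rightarrow> nat \<Rightarrow> real" where
  "mq N dl v i = (if i < N then slQ N dl (mx N v i) (sx N v i) (kx N v i) (v i) else 0)"
definition mt :: "nat \<Rightarrow> real \<Rightarrow> (nat \<Rightarrow> real) \<Rightarrow> nat \<Rightarrow> real" where
  "mt N dl v i = (if i < N then v i * slQ N dl (mx N v i) (sx N v i) (kx N v i) (v i)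
       - slI N dl (mx N v i) (sx N v i) (kx N v i) (v i) else 0)"

lemma pN_pos: "N \<ge> 3 \<Longrightarrow> 0 < pN N" by (simp add: pN_def)
lemma pN_le1: "N \<ge> 3 \<Longrightarrow> pN N \<le> 1" by (simp add: pN_def)

lemma mx_upd: "i < N \<Longrightarrow> mx N (v(i := w)) i = mx N v i"
proof -
  have "(v(i := w)) ` ({..<N} - {i}) = v ` ({..<N} - {i})" by auto
  then show ?thesis by (simp add: mx_def)
qed

lemma sx_upd: "sx N (v(i := w)) i = sx N v i"
proof -
  have "(v(i := w)) ` ({..<N} - {i, j}) = v ` ({..<N} - {i, j})" for j by auto
  then show ?thesis by (simp add: sx_def)
qed

lemma kx_upd: "kx N (v(i := w)) i = kx N v i"
proof -
  have m: "mx N (v(i := w)) i = mx N v i"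
  proof -
    have "(v(i := w)) ` ({..<N} - {i}) = v ` ({..<N} - {i})" by auto
    then show ?thesis by (simp add: mx_def)
  qed
  show ?thesis unfolding kx_def m by (intro arg_cong[where f="\<lambda>x. 1 + x"] sum.cong) auto
qed

lemma mx_ge: "j < N \<Longrightarrow> j \<noteq> i \<Longrightarrow> v j \<le> mx N v i"
  unfolding mx_def by (intro Max_ge) auto

lemma mx_attained: assumes "N \<ge> 2" shows "\<exists>j. j < N \<and> j \<noteq> i \<and> v j = mx N v i"
proof -
  have ne: "{..<N} - {i} \<noteq> {}"
  proof -
    have "(if i = 0 then 1 else 0) \<in> {..<N} - {i}" using assms by auto
    then show ?thesis by blast
  qed
  have "Max (v ` ({..<N} - {i})) \<in> v ` ({..<N} - {i})" using ne by (intro Max_in) auto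
  then show ?thesis unfolding mx_def by auto
qed

lemma ne_minus2:
  fixes N :: nat
  assumes "N \<ge> 3" "i < N" "j < N"
  shows "{..<N} - {i, j} \<noteq> {}"
proof -
  have "\<exists>k\<in>{0,1,2::nat}. k \<notin> {i,j}" by auto
  then obtain k where "k \<in> {0,1,2::nat}" "k \<notin> {i,j}" by blast
  then have "k \<in> {..<N} - {i, j}" using assms by auto
  then show ?thesis by blast
qed

lemma sx_char:
  assumes "N \<ge> 3" "i < N" "j0 < N" "j0 \<noteq> i" "v j0 = mx N v i"
  shows "sx N v i = Max (v ` ({..<N} - {i, j0}))"
proof -
  let ?M = "\<lambda>j. Max (v ` ({..<N} - {i, j}))"
  have le: "?M j0 \<le> ?M j" if "j \<in> {..<N} - {i}" for j
  proof (cases "j = j0")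
    case False
    have "j0 \<in> {..<N} - {i, j}" using assms that False by auto
    then have "v j0 \<le> ?M j" by (intro Max_ge) auto
    moreover have "?M j0 \<le> v j0"
    proof -
      have "?M j0 \<in> v ` ({..<N} - {i, j0})"
        using ne_minus2[OF assms(1,2,3)] by (intro Max_in) auto
      then obtain k where "k < N" "k \<noteq> i" "?M j0 = v k" by auto
      then show ?thesis using mx_ge[of k N i v] assms by simp
    qed
    ultimately show ?thesis by simp
  qed simp
  show ?thesis unfolding sx_def
    by (rule Min_eqI) (use le assms in auto)
qed

lemma sx_le_mx:
  assumes "N \<ge> 3" "i < N"
  shows "sx N v i \<le> mx N v i"
proof -
  obtain j0 where j0: "j0 < N" "j0 \<noteq> i" "v j0 = mx N v i" using mx_attained[of N i v] assms by auto
  have "Max (v ` ({..<N} - {i, j0})) \<in> v ` ({..<N} - {i, j0})"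
    using ne_minus2[OF assms j0(1)] by (intro Max_in) auto
  then obtain k where "k < N" "k \<noteq> i" "Max (v ` ({..<N} - {i, j0})) = v k" by auto
  then show ?thesis using sx_char[OF assms j0] mx_ge[of k N i v] by simp
qed

lemma sx_attained:
  assumes "N \<ge> 3" "i < N"
  shows "\<exists>k. k < N \<and> k \<noteq> i \<and> v k = sx N v i"
proof -
  obtain j0 where j0: "j0 < N" "j0 \<noteq> i" "v j0 = mx N v i" using mx_attained[of N i v] assms by auto
  have "Max (v ` ({..<N} - {i, j0})) \<in> v ` ({..<N} - {i, j0})"
    using ne_minus2[OF assms j0(1)] by (intro Max_in) auto
  then show ?thesis using sx_char[OF assms j0] by auto
qed

lemma mx_attained': "N \<ge> 3 \<Longrightarrow> i < N \<Longrightarrow> \<exists>j. j < N \<and> j \<noteq> i \<and> v j = mx N v i"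
  using mx_attained[of N i v] by simp

lemma profile_range: "v \<in> profiles N \<Longrightarrow> j < N \<Longrightarrow> 0 \<le> v j \<and> v j \<le> 1"
  by (auto simp: profiles_def PiE_def Pi_def)

lemma mx_range:
  assumes "v \<in> profiles N" "N \<ge> 3" "i < N"
  shows "0 \<le> mx N v i" "mx N v i \<le> 1"
  using mx_attained'[OF assms(2,3), of v] profile_range[OF assms(1)] by force+

lemma sx_range:
  assumes "v \<in> profiles N" "N \<ge> 3" "i < N"
  shows "0 \<le> sx N v i" "sx N v i \<le> 1"
  using sx_attained[OF assms(2,3), of v] profile_range[OF assms(1)] by force+

lemma kx_bounds:
  assumes "N \<ge> 3" "i < N"
  shows "2 \<le> kx N v i" "kx N v i \<le> real N"
proof -
  obtain j0 where j0: "j0 < N" "j0 \<noteq> i" "v j0 = mx N v i" using mx_attained'[OF assms] by auto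
  have "(\<Sum>j\<in>{..<N} - {i}. if v j = mx N v i then 1 else 0) \<ge> (\<Sum>j\<in>{j0}. if v j = mx N v i then 1 else (0::real))"
    using j0 by (intro sum_mono2) auto
  then show "2 \<le> kx N v i" using j0 by (simp add: kx_def)
  have "(\<Sum>j\<in>{..<N} - {i}. if v j = mx N v i then 1 else 0) \<le> (\<Sum>j\<in>{..<N} - {i}. (1::real))"
    by (intro sum_mono) auto
  also have "\<dots> = real N - 1" using assms by simp
  finally show "kx N v i \<le> real N" by (simp add: kx_def)
qed

lemma g1_bounds:
  assumes "N \<ge> 3" "0 < dl"
  shows "0 < g1 N dl" "g1 N dl \<le> dl powr pN N / (2 * real N)" "g1 N dl \<le> dl powr pN N / 8"
proof -
  have A: "0 < dl powr pN N" using assms by simp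
  have NN: "real N * (real N - 1) \<ge> 6" using assms
  proof -
    have "real N \<ge> 3" using assms by simp
    then have "real N * (real N - 1) \<ge> 3 * 2" by (intro mult_mono) auto
    then show ?thesis by simp
  qed
  show "0 < g1 N dl" using A NN by (simp add: g1_def)
  have "4 * real N * (real N - 1) \<ge> 2 * real N" using assms by (simp add: algebra_simps)
  then show "g1 N dl \<le> dl powr pN N / (2 * real N)"
    unfolding g1_def using A assms by (intro divide_left_mono) auto
  have "4 * real N * (real N - 1) \<ge> 8" using NN by simp
  then show "g1 N dl \<le> dl powr pN N / 8"
    unfolding g1_def using A by (intro divide_left_mono) auto
qed

lemma par_ok:
  assumes N: "N \<ge> 3" and dl: "0 < dl" "dl \<le> 1"
    and sm: "0 \<le> s" "s \<le> m" "m \<le> 1" and K: "2 \<le> K" "K \<le> real N"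
  shows "fam_ok (pN N) (prs N dl m s) (prm N dl m s) (prc N dl m s) (prth N dl m s K) (prk N dl m s)"
proof -
  let ?p = "pN N"
  have p: "0 < ?p" "?p \<le> 1" using N by (auto intro: pN_pos pN_le1)
  show ?thesis
  proof (cases "dl \<le> s")
    case True
    let ?k = "k0 N dl" let ?T = "fT ?p ?k m" let ?g = "g1 N dl"
    have g: "0 < ?g" "?g \<le> dl powr ?p / (2 * real N)" "?g \<le> dl powr ?p / 8"
      using g1_bounds[OF N dl(1)] by auto
    have k: "0 \<le> ?k" "?k \<le> dl powr ?p / 2"
      using g by (auto simp: k0_def)
    have mp: "dl powr ?p \<le> m powr ?p" using True sm dl p by (intro powr_mono2) auto
    have mp1: "m powr ?p \<le> 1" using sm p by (intro powr_le1) auto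
    have k1: "?k * (1 - m) \<le> ?k" using k sm by (simp add: mult_left_le)
    have k2: "0 \<le> ?k * (1 - m)" using k sm by simp
    have T1: "dl powr ?p / 2 \<le> ?T" using mp k k1 by (simp add: fT_def)
    have T2: "?T \<le> 1" using mp1 k2 by (simp add: fT_def)
    have T0: "0 \<le> ?T" using T1 dl by (smt (verit) powr_gt_zero zero_le_divide_iff)
    have th: "prth N dl m s K = ?T * (2 - ?T) / K" using True by (simp add: prth_def)
    have thlow: "?T / K \<le> ?T * (2 - ?T) / K"
      using T0 T2 K by (intro divide_right_mono) (auto simp: mult_le_cancel_left1 mult_left_le)
    have Tk: "dl powr ?p / 2 / real N \<le> ?T / K"
    proof -
      have "dl powr ?p / 2 / real N \<le> ?T / real N" using T1 N by (intro divide_right_mono) auto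
      also have "\<dots> \<le> ?T / K" using T0 K by (intro divide_left_mono) auto
      finally show ?thesis .
    qed
    have c: "prc N dl m s = ?g * (1 - m)" using True by (simp add: prc_def)
    have c1: "?g * (1 - m) \<le> ?g" using g sm by (simp add: mult_left_le)
    have c0: "0 \<le> ?g * (1 - m)" using g sm by simp
    have "?g \<le> dl powr ?p / 2 / real N" using g by simp
    then have cth: "prc N dl m s \<le> prth N dl m s K" using c c1 Tk thlow th by linarith
    have thT: "?T * (2 - ?T) / K \<le> ?T"
    proof -
      have "?T * (2 - ?T) \<le> ?T * K" using T0 K by (intro mult_left_mono) auto
      then show ?thesis using K by (simp add: divide_le_eq)
    qed
    show ?thesis using True p sm c0 c cth thT th k
      by (simp add: fam_ok_def prs_def prm_def prk_def)
  next
    case False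
    note F = False
    show ?thesis
    proof (cases "dl \<le> m")
      case True
      have "m powr ?p / K \<le> m powr ?p" using K by (simp add: divide_le_eq mult_le_cancel_left1)
      then show ?thesis using F True p sm K
        by (simp add: fam_ok_def prs_def prm_def prk_def prc_def prth_def fT_def)
    next
      case False
      then show ?thesis using F p dl
        by (simp add: fam_ok_def prs_def prm_def prk_def prc_def prth_def fT_def)
    qed
  qed
qed

lemma slice_ok:
  assumes N: "N \<ge> 3" and dl: "0 < dl" "dl \<le> 1" and v: "v \<in> profiles N" and i: "i < N"
  shows "fam_ok (pN N) (prs N dl (mx N v i) (sx N v i)) (prm N dl (mx N v i) (sx N v i))
     (prc N dl (mx N v i) (sx N v i)) (prth N dl (mx N v i) (sx N v i) (kx N v i)) (prk N dl (mx N v i) (sx N v i))"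
  by (rule par_ok[OF N dl]) (use sx_range[OF v N i] mx_range[OF v N i] sx_le_mx[OF N i] kx_bounds[OF N i] in auto)

lemma mech_DSIC:
  assumes N: "N \<ge> 3" and dl: "0 < dl" "dl \<le> 1"
  shows "DSIC N (mq N dl) (mt N dl)"
  unfolding DSIC_def
proof (intro ballI allI impI)
  fix v i w assume v: "v \<in> profiles N" and i: "i < N" and w: "w \<in> {0..(1::real)}"
  note ok = slice_ok[OF N dl v i]
  have u0: "0 \<le> v i" using profile_range[OF v i] by simp
  note IC = fam_IC[OF ok u0, of w]
  show "v i * mq N dl (v(i := w)) i - mt N dl (v(i := w)) i \<le> v i * mq N dl v i - mt N dl v i"
    using IC w i by (simp add: mq_def mt_def mx_upd sx_upd kx_upd slQ_def slI_def algebra_simps)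
qed

lemma mech_EPIR:
  assumes N: "N \<ge> 3" and dl: "0 < dl" "dl \<le> 1"
  shows "EPIR N (mq N dl) (mt N dl)"
  unfolding EPIR_def
proof (intro ballI allI impI)
  fix v i assume v: "v \<in> profiles N" and i: "i < N"
  note ok = slice_ok[OF N dl v i]
  have u0: "0 \<le> v i" using profile_range[OF v i] by simp
  show "0 \<le> v i * mq N dl v i - mt N dl v i"
    using fam_I_nonneg[OF ok u0] i by (simp add: mq_def mt_def slI_def)
qed

lemma meas_coord[measurable]:
  assumes "j < N"
  shows "(\<lambda>v. v j) \<in> borel_measurable (profile_space N)"
  unfolding profile_space_def using assms by (intro measurable_component_singleton) auto

lemma meas_mx[measurable]:
  assumes "i < N"
  shows "(\<lambda>v. mx N v i) \<in> borel_measurable (profile_space N)"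
  unfolding mx_def by (intro borel_measurable_Max) auto

lemma meas_sx[measurable]:
  assumes "i < N"
  shows "(\<lambda>v. sx N v i) \<in> borel_measurable (profile_space N)"
  unfolding sx_def by (intro borel_measurable_Min borel_measurable_Max) auto

lemma meas_kx[measurable]:
  assumes "i < N"
  shows "(\<lambda>v. kx N v i) \<in> borel_measurable (profile_space N)"
  unfolding kx_def using assms by measurable

lemma meas_slQ:
  assumes "f \<in> borel_measurable M" "g \<in> borel_measurable M" "h \<in> borel_measurable M" "u \<in> borel_measurable M"
  shows "(\<lambda>x. slQ N dl (f x) (g x) (h x) (u x)) \<in> borel_measurable M"
  unfolding slQ_def fQ_def prs_def prm_def prc_def prth_def prk_def fT_def using assms by measurable

lemma meas_slI:
  assumes "f \<in> borel_measurable M" "g \<in> borel_measurable M" "h \<in> borel_measurable M" "u \<in> borel_measurable M"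
  shows "(\<lambda>x. slI N dl (f x) (g x) (h x) (u x)) \<in> borel_measurable M"
  unfolding slI_def fI_def fJ_def prs_def prm_def prc_def prth_def prk_def fT_def using assms by measurable

lemma meas_mq:
  assumes "i < N"
  shows "(\<lambda>v. mq N dl v i) \<in> borel_measurable (profile_space N)"
  unfolding mq_def using assms by (simp add: meas_slQ meas_mx meas_sx meas_kx meas_coord)

lemma meas_mt:
  assumes "i < N"
  shows "(\<lambda>v. mt N dl v i) \<in> borel_measurable (profile_space N)"
  unfolding mt_def using assms
  by (simp add: meas_slQ meas_slI meas_mx meas_sx meas_kx meas_coord borel_measurable_times borel_measurable_diff)

lemma slice_nontop:
  assumes "u < m" "0 < dl"
  shows "slQ N dl m s K u = (if dl \<le> s \<and> s \<le> u then g1 N dl * (1 - m) else 0)"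
    and "u * slQ N dl m s K u - slI N dl m s K u = (if dl \<le> s \<and> s \<le> u then s * (g1 N dl * (1 - m)) else 0)"
proof -
  have "slQ N dl m s K u = (if dl \<le> s \<and> s \<le> u then g1 N dl * (1 - m) else 0) \<and>
        u * slQ N dl m s K u - slI N dl m s K u = (if dl \<le> s \<and> s \<le> u then s * (g1 N dl * (1 - m)) else 0)"
  proof (cases "dl \<le> s")
    case True then show ?thesis using assms
      by (simp add: slQ_def slI_def fQ_def fI_def prs_def prm_def prc_def prth_def prk_def algebra_simps)
  next
    case False
    then show ?thesis using assms
      by (cases "dl \<le> m") (simp_all add: slQ_def slI_def fQ_def fI_def prs_def prm_def prc_def prth_def prk_def)
  qed
  then show "slQ N dl m s K u = (if dl \<le> s \<and> s \<le> u then g1 N dl * (1 - m) else 0)"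
    and "u * slQ N dl m s K u - slI N dl m s K u = (if dl \<le> s \<and> s \<le> u then s * (g1 N dl * (1 - m)) else 0)"
    by auto
qed

lemma slice_top_act:
  assumes "m < u" "dl \<le> s"
  shows "slQ N dl m s K u = fT (pN N) (k0 N dl) u"
    and "u * slQ N dl m s K u - slI N dl m s K u
         = u * fT (pN N) (k0 N dl) u - ((m - s) * (g1 N dl * (1 - m)) + fJ (pN N) m (k0 N dl) u)"
  using assms by (simp_all add: slQ_def slI_def fQ_def fI_def prs_def prm_def prc_def prth_def prk_def)

lemma slice_top_mid:
  assumes "m < u" "\<not> dl \<le> s" "dl \<le> m"
  shows "slQ N dl m s K u = u powr pN N"
    and "u * slQ N dl m s K u - slI N dl m s K u = u * u powr pN N - fJ (pN N) m 0 u"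
  using assms by (simp_all add: slQ_def slI_def fQ_def fI_def prs_def prm_def prc_def prth_def prk_def fT_def)

lemma slice_top_low:
  assumes "m < u" "m < dl" "s \<le> m"
  shows "slQ N dl m s K u = (if u < dl then 0 else u powr pN N)"
    and "u * slQ N dl m s K u - slI N dl m s K u = (if u < dl then 0 else u * u powr pN N - fJ (pN N) dl 0 u)"
proof -
  have ns: "\<not> dl \<le> s" "\<not> dl \<le> m" using assms by auto
  show "slQ N dl m s K u = (if u < dl then 0 else u powr pN N)"
    using ns by (cases "u < dl"; cases "u = dl") (simp_all add: slQ_def fQ_def prs_def prm_def prc_def prth_def prk_def fT_def)
  show "u * slQ N dl m s K u - slI N dl m s K u = (if u < dl then 0 else u * u powr pN N - fJ (pN N) dl 0 u)"
    using ns by (cases "u < dl"; cases "u = dl")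
      (simp_all add: slQ_def slI_def fQ_def fI_def fJ_m prs_def prm_def prc_def prth_def prk_def fT_def)
qed

lemma slice_tie:
  assumes "u = m"
  shows "slQ N dl m s K u = (if dl \<le> s then fT (pN N) (k0 N dl) m * (2 - fT (pN N) (k0 N dl) m) / K
             else if dl \<le> m then m powr pN N / K else 0)"
    and "u * slQ N dl m s K u - slI N dl m s K u = (if dl \<le> s then m * (fT (pN N) (k0 N dl) m * (2 - fT (pN N) (k0 N dl) m) / K) - (m - s) * (g1 N dl * (1 - m))
             else if dl \<le> m then m * (m powr pN N / K) else 0)"
  using assms by (simp_all add: slQ_def slI_def fQ_def fI_def fJ_m prs_def prm_def prc_def prth_def prk_def)

lemma tv_ge: "j < N \<Longrightarrow> v j \<le> top_val N v"
  unfolding top_val_def by (intro Max_ge) auto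

lemma tv_attained: assumes "0 < N" shows "\<exists>j<N. v j = top_val N v"
proof -
  have "top_val N v \<in> v ` {..<N}" unfolding top_val_def using assms by (intro Max_in) auto
  then show ?thesis by auto
qed

lemma mx_le_tv: assumes "N \<ge> 3" "i < N" shows "mx N v i \<le> top_val N v"
proof -
  obtain j where "j < N" "j \<noteq> i" "v j = mx N v i" using mx_attained'[OF assms, of v] by blast
  then show ?thesis using tv_ge[of j N v] by simp
qed

lemma unique_top_mx:
  assumes N: "N \<ge> 3" and i: "i < N" "v i = top_val N v" and u: "\<And>j. j < N \<Longrightarrow> j \<noteq> i \<Longrightarrow> v j < top_val N v"
  shows "\<And>j. j < N \<Longrightarrow> j \<noteq> i \<Longrightarrow> mx N v j = top_val N v"
    and "mx N v i < top_val N v"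
proof -
  fix j assume j: "j < N" "j \<noteq> i"
  have "v i \<le> mx N v j" using mx_ge[of i N j v] i j by auto
  then show "mx N v j = top_val N v" using mx_le_tv[OF N j(1), of v] i by simp
next
  obtain j where "j < N" "j \<noteq> i" "v j = mx N v i" using mx_attained'[OF N i(1)] by auto
  then show "mx N v i < top_val N v" using u[of j] by simp
qed

lemma tie_mx:
  assumes N: "N \<ge> 3" and i: "i < N" "i' < N" "i \<noteq> i'" "v i = top_val N v" "v i' = top_val N v" and j: "j < N"
  shows "mx N v j = top_val N v"
proof -
  have "v i \<le> mx N v j \<or> v i' \<le> mx N v j"
    using mx_ge[of i N j v] mx_ge[of i' N j v] i j by (cases "j = i") auto
  then show ?thesis using mx_le_tv[OF N j, of v] i by auto
qed

lemma tie_sx: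
  assumes N: "N \<ge> 3" and i: "i < N" "i' < N" "i \<noteq> i'" "v i = top_val N v" "v i' = top_val N v"
    and j: "j < N" "j \<noteq> i" "j \<noteq> i'"
  shows "sx N v j = top_val N v"
proof -
  have m: "mx N v j = top_val N v" using tie_mx[OF N i j(1)] .
  have e: "sx N v j = Max (v ` ({..<N} - {j, i}))"
    using sx_char[OF N j(1) i(1) j(2)[symmetric]] m i by simp
  have "i' \<in> {..<N} - {j, i}" using i j by auto
  then have "v i' \<le> Max (v ` ({..<N} - {j, i}))" by (intro Max_ge) auto
  then have "top_val N v \<le> sx N v j" using e i by simp
  then show ?thesis using sx_le_mx[OF N j(1), of v] m by simp
qed

lemma tie_kx:
  assumes N: "N \<ge> 3" and i: "i < N" "v i = top_val N v" and m: "mx N v i = top_val N v"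
  shows "kx N v i = real (card {j\<in>{..<N}. v j = top_val N v})"
proof -
  let ?A = "{j\<in>{..<N}. v j = top_val N v}"
  have "(\<Sum>j\<in>{..<N} - {i}. if v j = mx N v i then 1 else (0::real)) = real (card (?A - {i}))"
  proof -
    have "(\<Sum>j\<in>{..<N} - {i}. if v j = mx N v i then 1 else (0::real)) = (\<Sum>j\<in>?A - {i}. 1)"
      using m by (intro sum.mono_neutral_cong_right) auto
    then show ?thesis by simp
  qed
  moreover have "card (?A - {i}) = card ?A - 1" using i by simp
  moreover have "card ?A \<ge> 1"
  proof -
    have "i \<in> ?A" using i by simp
    then have "?A \<noteq> {}" by blast
    then show ?thesis by (simp add: Suc_le_eq card_gt_0_iff)
  qed
  ultimately show ?thesis by (simp add: kx_def of_nat_diff)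
qed

section \<open>Feasibility\<close>

lemma fT_le1: "0 \<le> x \<Longrightarrow> x \<le> 1 \<Longrightarrow> 0 \<le> k \<Longrightarrow> 0 \<le> p \<Longrightarrow> fT p k x \<le> x powr p"
  unfolding fT_def by simp

lemma powr_le1': "0 \<le> x \<Longrightarrow> x \<le> 1 \<Longrightarrow> 0 \<le> p \<Longrightarrow> x powr p \<le> (1::real)"
  by (intro powr_le1) auto

lemma mq_bounds:
  assumes N: "N \<ge> 3" and dl: "0 < dl" "dl \<le> 1" and v: "v \<in> profiles N" and i: "i < N"
  shows "0 \<le> mq N dl v i" "mq N dl v i \<le> 1"
proof -
  note ok = slice_ok[OF N dl v i]
  let ?m = "mx N v i" and ?s = "sx N v i" and ?K = "kx N v i"
  have u: "0 \<le> v i" "v i \<le> 1" using profile_range[OF v i] by auto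
  have p: "0 < pN N" using pN_pos[OF N] .
  have m1: "prm N dl ?m ?s \<le> 1" "0 \<le> prm N dl ?m ?s" using mx_range[OF v N i] dl by (auto simp: prm_def)
  have k: "0 \<le> prk N dl ?m ?s" using g1_bounds[OF N dl(1)] by (simp add: prk_def k0_def)
  from ok have th: "prth N dl ?m ?s ?K \<le> fT (pN N) (prk N dl ?m ?s) (prm N dl ?m ?s)" by (simp add: fam_ok_def)
  have "fT (pN N) (prk N dl ?m ?s) (prm N dl ?m ?s) \<le> 1"
    using fT_le1[OF m1(2,1) k, of "pN N"] powr_le1'[OF m1(2,1), of "pN N"] p by linarith
  moreover have "fT (pN N) (prk N dl ?m ?s) (v i) \<le> 1"
    using fT_le1[OF u k, of "pN N"] powr_le1'[OF u, of "pN N"] p by linarith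
  ultimately show "mq N dl v i \<le> 1"
    using fam_Q_bounds(2)[OF ok u(1)] th i by (simp add: mq_def slQ_def)
  show "0 \<le> mq N dl v i" using fam_Q_bounds(1)[OF ok u(1)] i by (simp add: mq_def slQ_def)
qed

lemma sum_split_one:
  fixes f :: "nat \<Rightarrow> real"
  assumes "i < N"
  shows "(\<Sum>j<N. f j) = f i + (\<Sum>j\<in>{..<N} - {i}. f j)"
  using assms by (simp add: sum.remove)

lemma mech_feasible:
  assumes N: "N \<ge> 3" and dl: "0 < dl" "dl \<le> 1"
  shows "feasible N (mq N dl)"
  unfolding feasible_def
proof (intro ballI conjI allI impI)
  fix v assume v: "v \<in> profiles N"
  show "\<And>i. i < N \<Longrightarrow> 0 \<le> mq N dl v i" using mq_bounds[OF N dl v] by auto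
  show "\<And>i. i < N \<Longrightarrow> mq N dl v i \<le> 1" using mq_bounds[OF N dl v] by auto
  let ?M = "top_val N v"
  have p: "0 < pN N" "pN N \<le> 1" using pN_pos[OF N] pN_le1[OF N] by auto
  obtain i where i: "i < N" "v i = ?M" using tv_attained[of N v] N by auto
  have M: "0 \<le> ?M" "?M \<le> 1" using profile_range[OF v i(1)] i by auto
  show "(\<Sum>j<N. mq N dl v j) \<le> 1"
  proof (cases "\<forall>j<N. j \<noteq> i \<longrightarrow> v j < ?M")
    case True
    have top: "mx N v i < ?M" using unique_top_mx(2)[OF N i] True by blast
    have others: "mx N v j = ?M" if "j < N" "j \<noteq> i" for j using unique_top_mx(1)[OF N i] True that by blast
    have qi: "mq N dl v i \<le> ?M powr pN N"
    proof -
      let ?m = "mx N v i" and ?s = "sx N v i"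
      have sm: "?s \<le> ?m" using sx_le_mx[OF N i(1)] .
      have k0: "0 \<le> k0 N dl" using g1_bounds[OF N dl(1)] by (simp add: k0_def)
      show ?thesis
      proof (cases "dl \<le> ?s")
        case True
        then show ?thesis using slice_top_act(1)[of ?m "v i" dl ?s N] top i fT_le1[OF M k0, of "pN N"] p
          by (simp add: mq_def)
      next
        case False
        show ?thesis
        proof (cases "dl \<le> ?m")
          case True
          then show ?thesis using slice_top_mid(1)[of ?m "v i" dl ?s N] top i False by (simp add: mq_def)
        next
          case False
          then show ?thesis using slice_top_low(1)[of ?m "v i" dl ?s N] top i sm M p
            by (simp add: mq_def)
        qed
      qed
    qed
    have qj: "mq N dl v j \<le> g1 N dl * (1 - ?M)" if "j < N" "j \<noteq> i" for j
    proof -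
      have "v j < mx N v j" using True that others by auto
      then have "mq N dl v j = (if dl \<le> sx N v j \<and> sx N v j \<le> v j then g1 N dl * (1 - mx N v j) else 0)"
        using slice_nontop(1)[of "v j" "mx N v j" dl N "sx N v j"] dl that by (simp add: mq_def)
      moreover have "0 \<le> g1 N dl * (1 - ?M)" using g1_bounds[OF N dl(1)] M by simp
      ultimately show ?thesis using others[OF that] by auto
    qed
    have "(\<Sum>j<N. mq N dl v j) = mq N dl v i + (\<Sum>j\<in>{..<N} - {i}. mq N dl v j)"
      using sum_split_one[OF i(1)] .
    also have "(\<Sum>j\<in>{..<N} - {i}. mq N dl v j) \<le> (\<Sum>j\<in>{..<N} - {i}. g1 N dl * (1 - ?M))"
      using qj by (intro sum_mono) auto
    also have "\<dots> = (real N - 1) * (g1 N dl * (1 - ?M))" using i N by (simp add: of_nat_diff)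
    finally have "(\<Sum>j<N. mq N dl v j) \<le> ?M powr pN N + (real N - 1) * (g1 N dl * (1 - ?M))"
      using qi by linarith
    also have "(real N - 1) * (g1 N dl * (1 - ?M)) \<le> pN N * (1 - ?M)"
    proof -
      have "(real N - 1) * g1 N dl \<le> pN N"
      proof -
        have "dl powr pN N \<le> 1" using powr_le1'[of dl "pN N"] dl p by auto
        then have "(real N - 1) * g1 N dl = dl powr pN N / (4 * real N)" using N by (simp add: g1_def field_simps)
        also have "\<dots> \<le> 1 / (4 * real N)" using \<open>dl powr pN N \<le> 1\<close> N by (intro divide_right_mono) auto
        also have "\<dots> \<le> pN N" using N by (simp add: pN_def field_simps)
        finally show ?thesis .
      qed
      then show ?thesis using M by (simp add: mult.assoc[symmetric] mult_right_mono)
    qed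
    also have "pN N * (1 - ?M) \<le> 1 - ?M powr pN N" using one_minus_powr_ge[OF M p] .
    finally show ?thesis by simp
  next
    case False
    then obtain i' where i'0: "i' < N" "i' \<noteq> i" "\<not> v i' < ?M" by blast
    then have i': "i' < N" "i' \<noteq> i" "v i' = ?M" using tv_ge[of i' N v] by auto
    let ?A = "{j\<in>{..<N}. v j = ?M}"
    have mxj: "mx N v j = ?M" if "j < N" for j using tie_mx[OF N i(1) i'(1) i'(2)[symmetric] i(2) i'(3) that] .
    have qn: "mq N dl v j = 0" if "j < N" "v j \<noteq> ?M" for j
    proof -
      have jne: "j \<noteq> i" "j \<noteq> i'" using that i i' by auto
      have sx: "sx N v j = ?M" using tie_sx[OF N i(1) i'(1) i'(2)[symmetric] i(2) i'(3) that(1) jne] .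
      have "v j < mx N v j" using mxj[OF that(1)] tv_ge[of j N v] that by auto
      then show ?thesis using slice_nontop(1)[of "v j" "mx N v j" dl N "sx N v j"] dl that sx mxj[OF that(1)]
        by (simp add: mq_def)
    qed
    have cardA: "card ?A \<ge> 1"
    proof -
      have "i \<in> ?A" using i by simp
      then have "?A \<noteq> {}" by blast
      then show ?thesis by (simp add: Suc_le_eq card_gt_0_iff)
    qed
    have qa: "mq N dl v j \<le> 1 / real (card ?A)" if "j \<in> ?A" for j
    proof -
      have j: "j < N" "v j = ?M" using that by auto
      have K: "kx N v j = real (card ?A)" using tie_kx[OF N j mxj[OF j(1)]] .
      let ?T = "fT (pN N) (k0 N dl) ?M"
      have k0: "0 \<le> k0 N dl" using g1_bounds[OF N dl(1)] by (simp add: k0_def)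
      have T1: "?T * (2 - ?T) \<le> 1"
      proof -
        have "?T * (2 - ?T) = 1 - (1 - ?T)^2" by (simp add: power2_eq_square algebra_simps)
        then show ?thesis by simp
      qed
      have Mp: "?M powr pN N \<le> 1" using powr_le1'[OF M] p by auto
      have "mq N dl v j = (if dl \<le> sx N v j then ?T * (2 - ?T) / real (card ?A)
             else if dl \<le> ?M then ?M powr pN N / real (card ?A) else 0)"
        using slice_tie(1)[of "v j" "mx N v j" N dl "sx N v j" "kx N v j"] j mxj[OF j(1)] K by (simp add: mq_def)
      moreover have "0 \<le> 1 / real (card ?A)" by simp
      ultimately show ?thesis using T1 Mp cardA by (auto intro: divide_right_mono)
    qed
    have "(\<Sum>j<N. mq N dl v j) = (\<Sum>j\<in>?A. mq N dl v j)"
      using qn by (intro sum.mono_neutral_right) auto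
    also have "\<dots> \<le> (\<Sum>j\<in>?A. 1 / real (card ?A))" using qa by (intro sum_mono) auto
    also have "\<dots> = 1" using cardA i by auto
    finally show ?thesis .
  qed
qed

definition aN :: "nat \<Rightarrow> real" where "aN N = real N / (real N - 1)"
definition ph :: "nat \<Rightarrow> real \<Rightarrow> real" where "ph N x = x powr aN N / real N"
definition bb :: "nat \<Rightarrow> real \<Rightarrow> real" where
  "bb N dl = dl powr aN N / (32 * real N * real N * (real N - 1))"
definition et :: "nat \<Rightarrow> real \<Rightarrow> real \<Rightarrow> real" where
  "et N dl x = (if dl < x \<and> x \<le> 1/2 then bb N dl else if 0 < x \<and> x \<le> dl then - (dl powr aN N / real N) else 0)"

lemma aN_eq: "N \<ge> 3 \<Longrightarrow> aN N = 1 + pN N"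
  by (simp add: aN_def pN_def field_simps)

lemma aN_inv: "N \<ge> 3 \<Longrightarrow> y / aN N = y * (real N - 1) / real N"
  by (simp add: aN_def field_simps)

lemma powr_aN: "N \<ge> 3 \<Longrightarrow> 0 \<le> x \<Longrightarrow> x powr aN N = x * x powr pN N"
  using powr_one_plus[of x "pN N"] aN_eq[of N] by simp

lemma bb_facts:
  assumes N: "N \<ge> 3" and dl: "0 < dl" "dl \<le> 1"
  shows "0 \<le> bb N dl" "bb N dl \<le> dl powr aN N / aN N" "2 * bb N dl \<le> dl powr aN N / 3"
    "real N * bb N dl = g1 N dl * dl / 8" "real N * bb N dl \<le> 3 / (32 * real N)"
    "real N * bb N dl \<le> pN N * dl powr aN N / 8"
proof -
  let ?d = "dl powr aN N"
  have d0: "0 < ?d" using dl by simp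
  have d1: "?d \<le> 1" using dl N by (intro powr_le1) (auto simp: aN_def)
  have N3: "real N \<ge> 3" using N by simp
  have D: "32 * real N * real N * (real N - 1) \<ge> 32 * 3 * 3 * 2"
  proof -
    have "real N * real N \<ge> 3 * 3" using N3 by (intro mult_mono) auto
    moreover have "real N - 1 \<ge> 2" using N3 by simp
    ultimately have "real N * real N * (real N - 1) \<ge> 3 * 3 * 2" by (intro mult_mono) auto
    then show ?thesis by simp
  qed
  show "0 \<le> bb N dl" using d0 N3 by (simp add: bb_def)
  have "aN N \<le> 32 * real N * real N * (real N - 1)"
  proof -
    have "aN N \<le> 2" using N3 by (simp add: aN_def field_simps)
    then show ?thesis using D by simp
  qed
  then show "bb N dl \<le> ?d / aN N" unfolding bb_def using d0 N3
    by (intro divide_left_mono) (auto simp: aN_def)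
  have "2 * bb N dl = ?d / (16 * real N * real N * (real N - 1))" by (simp add: bb_def)
  also have "\<dots> \<le> ?d / 3"
  proof (rule divide_left_mono)
    show "3 \<le> 16 * real N * real N * (real N - 1)" using D by simp
  qed (use d0 D in auto)
  finally show "2 * bb N dl \<le> ?d / 3" .
  have dd: "dl powr pN N * dl = ?d" using powr_aN[OF N, of dl] dl by (simp add: mult.commute)
  show "real N * bb N dl = g1 N dl * dl / 8"
    unfolding bb_def g1_def using N3 dd[symmetric] by (simp add: field_simps)
  have "real N * bb N dl = ?d / (32 * real N * (real N - 1))" using N3 by (simp add: bb_def field_simps)
  also have "\<dots> \<le> 1 / (32 * real N * (real N - 1))" using d1 N3 by (intro divide_right_mono) auto
  also have "\<dots> \<le> 3 / (32 * real N)" using N3 by (simp add: field_simps)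
  finally show "real N * bb N dl \<le> 3 / (32 * real N)" .
  have "real N * bb N dl = ?d / (32 * real N * (real N - 1))" using N3 by (simp add: bb_def field_simps)
  also have "\<dots> \<le> ?d / (8 * (real N - 1))"
  proof (rule divide_left_mono)
    have "8 * (real N - 1) \<le> (32 * real N) * (real N - 1)" using N3 by (intro mult_right_mono) auto
    then show "8 * (real N - 1) \<le> 32 * real N * (real N - 1)" by simp
  qed (use d0 N3 in auto)
  also have "\<dots> = pN N * ?d / 8" by (simp add: pN_def)
  finally show "real N * bb N dl \<le> pN N * ?d / 8" .
qed

lemma ph_et_low:
  assumes N: "N \<ge> 3" and x: "0 \<le> x" "x \<le> dl"
  shows "ph N x + et N dl x \<le> 0"
proof (cases "x = 0")
  case True
  then show ?thesis using N x by (simp add: ph_def et_def aN_def)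
next
  case False
  then have "0 < x" using x by simp
  have "x powr aN N \<le> dl powr aN N" using x N by (intro powr_mono2) (auto simp: aN_def)
  then show ?thesis using \<open>0 < x\<close> x by (simp add: ph_def et_def divide_right_mono)
qed

lemma et_le_bb:
  assumes N: "N \<ge> 3" and dl: "0 < dl" "dl \<le> 1"
  shows "et N dl x \<le> bb N dl"
proof -
  have "0 \<le> dl powr aN N / real N" by simp
  then have A: "- (dl powr aN N / real N) \<le> bb N dl" using bb_facts(1)[OF N dl] by linarith
  then show ?thesis using bb_facts(1)[OF N dl] by (simp add: et_def)
qed

lemma et_nonpos:
  assumes N: "N \<ge> 3" and dl: "0 < dl" "dl \<le> 1" and "\<not> (dl < x \<and> x \<le> 1/2)"
  shows "et N dl x \<le> 0"
  using assms dl by (auto simp: et_def)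

lemma sum_et_bound:
  assumes N: "N \<ge> 3" and dl: "0 < dl" "dl \<le> 1"
  shows "(\<Sum>i<N. et N dl (v i)) \<le> real N * bb N dl"
    and "\<not> (\<exists>i<N. dl < v i \<and> v i \<le> 1/2) \<Longrightarrow> (\<Sum>i<N. et N dl (v i)) \<le> 0"
proof -
  have "(\<Sum>i<N. et N dl (v i)) \<le> (\<Sum>i<N. bb N dl)" using et_le_bb[OF N dl] by (intro sum_mono) auto
  then show "(\<Sum>i<N. et N dl (v i)) \<le> real N * bb N dl" by simp
  assume "\<not> (\<exists>i<N. dl < v i \<and> v i \<le> 1/2)"
  then have "(\<Sum>i<N. et N dl (v i)) \<le> (\<Sum>i<N. 0)" using et_nonpos[OF N dl] by (intro sum_mono) auto
  then show "(\<Sum>i<N. et N dl (v i)) \<le> 0" by simp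
qed

lemma poly_f:
  fixes x y :: real
  assumes "0 \<le> x" "x \<le> y" "y \<le> 1"
  shows "0 \<le> y^2 - 4*x*y + x^2 + 2*x"
    and "x \<le> 1/2 \<Longrightarrow> x / 2 \<le> y^2 - 4*x*y + x^2 + 2*x"
    and "1/2 \<le> x \<Longrightarrow> (1 - x)^2 \<le> y^2 - 4*x*y + x^2 + 2*x"
proof -
  have e1: "y^2 - 4*x*y + x^2 + 2*x = (y - 2*x)^2 + x * (2 - 3*x)" by (simp add: power2_eq_square algebra_simps)
  have e2: "y^2 - 4*x*y + x^2 + 2*x = (1 - x)^2 + (1 - y) * (4*x - 1 - y)" by (simp add: power2_eq_square algebra_simps)
  show h: "x / 2 \<le> y^2 - 4*x*y + x^2 + 2*x" if "x \<le> 1/2"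
  proof -
    have "0 \<le> 3 * x * (1/2 - x)" using that assms by (intro mult_nonneg_nonneg) auto
    then have "x / 2 \<le> x * (2 - 3*x)" by (simp add: algebra_simps)
    then show ?thesis unfolding e1 by (smt (verit) zero_le_power2)
  qed
  show h2: "(1 - x)^2 \<le> y^2 - 4*x*y + x^2 + 2*x" if "1/2 \<le> x"
  proof -
    have "0 \<le> (1 - y) * (4*x - 1 - y)" using that assms by (intro mult_nonneg_nonneg) auto
    then show ?thesis unfolding e2 by simp
  qed
  show "0 \<le> y^2 - 4*x*y + x^2 + 2*x"
  proof (cases "x \<le> 1/2")
    case True then show ?thesis using h assms by fastforce
  next
    case False then show ?thesis using h2 by (smt (verit) zero_le_power2)
  qed
qed

lemma far_gap:
  assumes N: "N \<ge> 3" and w: "0 \<le> w" "w \<le> 1/2" and x: "3/4 < x" "x \<le> 1"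
  shows "3/16 \<le> x powr aN N - w powr aN N"
proof -
  have p: "0 < pN N" "pN N \<le> 1" using pN_pos[OF N] pN_le1[OF N] by auto
  have "w powr pN N \<le> x powr pN N" using w x p by (intro powr_mono2) auto
  then have "w * w powr pN N \<le> w * x powr pN N" using w by (intro mult_left_mono) auto
  then have "x powr aN N - w powr aN N \<ge> (x - w) * x powr pN N"
    using powr_aN[OF N, of x] powr_aN[OF N, of w] w x by (simp add: algebra_simps)
  moreover have "(3/4::real) powr 1 \<le> (3/4) powr pN N" using p by (intro powr_mono') auto
  moreover have "(3/4::real) powr pN N \<le> x powr pN N" using x p by (intro powr_mono2) auto
  moreover have "1/4 \<le> x - w" using w x by simp
  ultimately have "(1/4) * (3/4) \<le> (x - w) * x powr pN N" by (intro mult_mono) auto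
  then show ?thesis using \<open>x powr aN N - w powr aN N \<ge> (x - w) * x powr pN N\<close> by simp
qed

lemma gap_lower:
  assumes N: "N \<ge> 3" and "0 \<le> w" "w \<le> x"
  shows "(x - w) * x powr pN N \<le> x powr aN N - w powr aN N"
proof -
  have p: "0 < pN N" using pN_pos[OF N] .
  have "w powr pN N \<le> x powr pN N" using assms p by (intro powr_mono2) auto
  then have "w * w powr pN N \<le> w * x powr pN N" using assms by (intro mult_left_mono) auto
  then show ?thesis using powr_aN[OF N, of x] powr_aN[OF N, of w] assms by (simp add: algebra_simps)
qed

lemma tie_gain:
  assumes N: "N \<ge> 3" and dl: "0 < dl" "dl \<le> 1" and M: "dl \<le> M" "M \<le> 1"
  shows "pN N * dl powr aN N * (1 - M) / 2 \<le>
    M * (fT (pN N) (k0 N dl) M * (2 - fT (pN N) (k0 N dl) M) - M powr pN N)"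
proof -
  let ?p = "pN N" and ?k = "k0 N dl"
  let ?w = "1 - M powr ?p" and ?e = "?k * (1 - M)"
  have p: "0 < ?p" "?p \<le> 1" using pN_pos[OF N] pN_le1[OF N] by auto
  have M0: "0 \<le> M" using M dl by simp
  have w1: "?p * (1 - M) \<le> ?w" using one_minus_powr_ge[OF M0 M(2) p] .
  have dp: "dl powr ?p \<le> M powr ?p" using M dl p by (intro powr_mono2) auto
  have w2: "?w \<le> 1 - dl powr ?p" using dp by simp
  have w0: "0 \<le> ?w" using w1 p M by (smt (verit) mult_nonneg_nonneg)
  have k: "0 \<le> ?k" "?k * (real N - 1) = dl powr ?p / (8 * real N)"
    using g1_bounds[OF N dl(1)] N by (auto simp: k0_def g1_def field_simps)
  have eps0: "?e \<le> ?w * (dl powr ?p / (8 * real N))"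
  proof -
    have "?e = ?k * (real N - 1) * (?p * (1 - M))" using N by (simp add: pN_def field_simps)
    also have "\<dots> \<le> ?k * (real N - 1) * ?w" using w1 k N by (intro mult_left_mono) auto
    finally show ?thesis using k by (simp add: mult.commute)
  qed
  define E where "E = dl powr ?p / (8 * real N)"
  have eps: "?e \<le> ?w * E" using eps0 by (simp add: E_def)
  have E0: "0 \<le> E" "E \<le> 1/24"
  proof -
    have "dl powr ?p \<le> 1" using dl p by (intro powr_le1) auto
    then show "E \<le> 1/24" using N by (simp add: E_def field_simps)
  qed (use dl in \<open>simp add: E_def\<close>)
  have e0: "0 \<le> ?e" using k M by simp
  have eq: "fT ?p ?k M * (2 - fT ?p ?k M) - M powr ?p = ?w - (?w + ?e)^2"
    by (simp add: fT_def power2_eq_square algebra_simps)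
  have sq: "(?w + ?e)^2 \<le> ?w^2 * (1 + 3 * E)"
  proof -
    have "?w + ?e \<le> ?w * (1 + E)" using eps by (simp add: algebra_simps)
    then have "(?w + ?e)^2 \<le> (?w * (1 + E))^2" using w0 e0 by (intro power_mono) auto
    also have "\<dots> = ?w^2 * (1 + E)^2" by (simp add: power_mult_distrib)
    also have "(1 + E)^2 \<le> 1 + 3 * E"
    proof -
      have "E * E \<le> E * 1" using E0 by (intro mult_left_mono) auto
      then show ?thesis by (simp add: power2_eq_square algebra_simps)
    qed
    then have "?w^2 * (1 + E)^2 \<le> ?w^2 * (1 + 3 * E)" by (intro mult_left_mono) auto
    finally show ?thesis .
  qed
  have "?w * (1 - ?w * (1 + 3 * E)) = ?w - ?w^2 * (1 + 3 * E)" by (simp add: power2_eq_square algebra_simps)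
  then have "?w - (?w + ?e)^2 \<ge> ?w * (1 - ?w * (1 + 3 * E))" using sq by linarith
  moreover have "?w * (1 + 3 * E) \<le> 1 - dl powr ?p / 2"
  proof -
    have "?w * (1 + 3 * E) \<le> (1 - dl powr ?p) * (1 + 3 * E)" using w2 E0 by (intro mult_right_mono) auto
    also have "\<dots> \<le> 1 - dl powr ?p + 3 * E"
    proof -
      have "(1 - dl powr ?p) * (1 + 3 * E) = 1 - dl powr ?p + 3 * E - 3 * (dl powr ?p * E)" by (simp add: algebra_simps)
      moreover have "0 \<le> dl powr ?p * E" using E0 by simp
      ultimately show ?thesis by linarith
    qed
    also have "3 * E \<le> dl powr ?p / 2" using N dl by (simp add: E_def field_simps)
    finally show ?thesis by simp
  qed
  ultimately have A: "?w - (?w + ?e)^2 \<ge> ?w * (dl powr ?p / 2)"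
  proof -
    assume a1: "?w - (?w + ?e)^2 \<ge> ?w * (1 - ?w * (1 + 3 * E))" and a2: "?w * (1 + 3 * E) \<le> 1 - dl powr ?p / 2"
    have "?w * (dl powr ?p / 2) \<le> ?w * (1 - ?w * (1 + 3 * E))" using a2 w0 by (intro mult_left_mono) auto
    then show ?thesis using a1 by linarith
  qed
  have "pN N * dl powr aN N * (1 - M) / 2 = dl * (?p * (1 - M) * (dl powr ?p / 2))"
    using powr_aN[OF N, of dl] dl by (simp add: field_simps)
  also have "\<dots> \<le> M * (?w * (dl powr ?p / 2))"
  proof (rule mult_mono)
    show "?p * (1 - M) * (dl powr ?p / 2) \<le> ?w * (dl powr ?p / 2)" using w1 by (intro mult_right_mono) auto
    show "0 \<le> ?p * (1 - M) * (dl powr ?p / 2)" using p M by simp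
  qed (use M dl in auto)
  also have "\<dots> \<le> M * (?w - (?w + ?e)^2)" using A M0 by (intro mult_left_mono) auto
  finally have X: "pN N * dl powr aN N * (1 - M) / 2 \<le> M * (?w - (?w + ?e)^2)" .
  show ?thesis unfolding eq using X .
qed

section \<open>Revenue bound: unique top bidder\<close>

lemma sum_split_two:
  fixes f :: "nat \<Rightarrow> real"
  assumes "i < N" "j < N" "i \<noteq> j"
  shows "(\<Sum>k<N. f k) = f i + f j + (\<Sum>k\<in>{..<N} - {i, j}. f k)"
proof -
  have "(\<Sum>k<N. f k) = f i + (\<Sum>k\<in>{..<N} - {i}. f k)" using assms by (simp add: sum.remove)
  also have "(\<Sum>k\<in>{..<N} - {i}. f k) = f j + (\<Sum>k\<in>{..<N} - {i} - {j}. f k)"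
    using assms by (intro sum.remove) auto
  also have "{..<N} - {i} - {j} = {..<N} - {i, j}" by auto
  finally show ?thesis by simp
qed

lemma fJ_aN:
  assumes N: "N \<ge> 3"
  shows "fJ (pN N) m k u = (u powr aN N - m powr aN N) * (real N - 1) / real N + k * ((1 - u)^2 - (1 - m)^2) / 2"
  unfolding fJ_def aN_eq[OF N, symmetric] using aN_inv[OF N] by simp

lemma alg1:
  fixes A X K m x n :: real
  assumes "n \<noteq> 0"
  shows "A - K * m * (1 - m) - ((A - X) * (n - 1) / n + K * ((1 - m)^2 - (1 - x)^2) / 2)
     = A / n + (n - 1) * (X / n) + K / 2 * ((1 - x)^2 - (1 - m^2))"
  using assms by (simp add: field_simps power2_eq_square)

lemma rev_unique:
  assumes N: "N \<ge> 3" and dl: "0 < dl" "dl \<le> 1/8" and v: "v \<in> profiles N"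
    and i: "i < N" "v i = top_val N v" and u: "\<And>j. j < N \<Longrightarrow> j \<noteq> i \<Longrightarrow> v j < top_val N v"
  shows "(\<Sum>j<N. ph N (v j) + et N dl (v j)) \<le> (\<Sum>j<N. mt N dl v j)"
proof -
  have dl1: "dl \<le> 1" using dl by simp
  let ?M = "top_val N v" and ?x = "mx N v i" and ?s = "sx N v i"
  let ?p = "pN N" and ?a = "aN N" and ?g = "g1 N dl" and ?k = "k0 N dl" and ?b = "bb N dl"
  have p: "0 < ?p" "?p \<le> 1" using pN_pos[OF N] pN_le1[OF N] by auto
  have g: "0 < ?g" "?g \<le> dl powr ?p / 8" using g1_bounds[OF N dl(1)] by auto
  have g4: "4 * real N * ?g \<le> dl powr ?p"
  proof -
    have "4 * real N * ?g = dl powr ?p / (real N - 1)" using N by (simp add: g1_def field_simps)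
    also have "\<dots> \<le> dl powr ?p" using N by (simp add: divide_le_eq mult_le_cancel_left1)
    finally show ?thesis .
  qed
  have kg: "?k = ?g / 2" by (simp add: k0_def)
  have rng: "\<And>j. j < N \<Longrightarrow> 0 \<le> v j \<and> v j \<le> 1" using profile_range[OF v] by auto
  have M: "0 \<le> ?M" "?M \<le> 1" using rng[OF i(1)] i by auto
  have xM: "?x < ?M" using unique_top_mx(2)[OF N i u] .
  have mxj: "\<And>j. j < N \<Longrightarrow> j \<noteq> i \<Longrightarrow> mx N v j = ?M" using unique_top_mx(1)[OF N i u] .
  obtain j0 where j0: "j0 < N" "j0 \<noteq> i" "v j0 = ?x" using mx_attained'[OF N i(1)] by blast
  have sch: "?s = Max (v ` ({..<N} - {i, j0}))" using sx_char[OF N i(1) j0] .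
  have ne: "{..<N} - {i, j0} \<noteq> {}" using ne_minus2[OF N i(1) j0(1)] .
  obtain j1 where j1: "j1 < N" "j1 \<noteq> i" "j1 \<noteq> j0" "v j1 = ?s"
  proof -
    have "Max (v ` ({..<N} - {i, j0})) \<in> v ` ({..<N} - {i, j0})" using ne by (intro Max_in) auto
    then obtain k where k: "Max (v ` ({..<N} - {i, j0})) = v k" "k \<in> {..<N} - {i, j0}" by (rule imageE)
    have "k < N" "k \<noteq> i" "k \<noteq> j0" using k(2) by auto
    then show ?thesis using that[of k] k(1) sch by simp
  qed
  have le_s: "v j \<le> ?s" if "j < N" "j \<noteq> i" "j \<noteq> j0" for j
    unfolding sch using that by (intro Max_ge) auto
  have le_x: "v j \<le> ?x" if "j < N" "j \<noteq> i" for j using mx_ge[of j N i v] that by simp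
  have sx_le: "?s \<le> ?x" using sx_le_mx[OF N i(1)] .
  have x0: "0 \<le> ?s" "0 \<le> ?x" using sx_range[OF v N i(1)] mx_range[OF v N i(1)] by auto
  have sj0: "sx N v j0 = ?s"
  proof -
    have "v i = mx N v j0" using mxj[OF j0(1,2)] i by simp
    then have "sx N v j0 = Max (v ` ({..<N} - {j0, i}))" using sx_char[OF N j0(1) i(1) j0(2)[symmetric]] by simp
    also have "{..<N} - {j0, i} = {..<N} - {i, j0}" by auto
    finally show ?thesis using sch by simp
  qed
  have mt_nt: "mt N dl v j = (if dl \<le> sx N v j \<and> sx N v j \<le> v j then sx N v j * (?g * (1 - ?M)) else 0)"
    if "j < N" "j \<noteq> i" for j
  proof -
    have "v j < mx N v j" using u[OF that] mxj[OF that] by simp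
    then show ?thesis using slice_nontop(2)[of "v j" "mx N v j" dl N "sx N v j" "kx N v j"] dl that mxj[OF that]
      by (simp add: mt_def)
  qed
  have mt_nt0: "0 \<le> mt N dl v j" if "j < N" "j \<noteq> i" for j
    using mt_nt[OF that] sx_range[OF v N that(1)] g M by auto
  have mt_j0: "mt N dl v j0 = (if dl \<le> ?s then ?s * (?g * (1 - ?M)) else 0)"
    using mt_nt[OF j0(1,2)] sj0 sx_le j0 by simp
  have Rge: "mt N dl v i + mt N dl v j0 \<le> (\<Sum>j<N. mt N dl v j)"
  proof -
    have "0 \<le> (\<Sum>j\<in>{..<N} - {i, j0}. mt N dl v j)" using mt_nt0 by (intro sum_nonneg) auto
    then show ?thesis using sum_split_two[OF i(1) j0(1) j0(2)[symmetric], of "mt N dl v"] by simp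
  qed
  have Rnn: "mt N dl v i \<le> (\<Sum>j<N. mt N dl v j)"
  proof -
    have "0 \<le> (\<Sum>j\<in>{..<N} - {i}. mt N dl v j)" using mt_nt0 by (intro sum_nonneg) auto
    then show ?thesis using sum_split_one[OF i(1), of "mt N dl v"] by simp
  qed
  have split2: "(\<Sum>j<N. ph N (v j) + et N dl (v j)) = (ph N ?M + et N dl ?M) + (ph N ?x + et N dl ?x)
      + (\<Sum>j\<in>{..<N} - {i, j0}. ph N (v j) + et N dl (v j))"
    using sum_split_two[OF i(1) j0(1) j0(2)[symmetric], of "\<lambda>j. ph N (v j) + et N dl (v j)"] i j0 by simp
  have phM: "ph N ?M + et N dl ?M \<le> ?M powr ?a / real N + ?b"
    using et_le_bb[OF N dl(1) dl1] by (simp add: ph_def)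
  note bbf = bb_facts[OF N dl(1) dl1]
  show ?thesis
  proof (cases "dl \<le> ?s")
    case act: True
    have xdl: "dl \<le> ?x" using act sx_le by simp
    have mti: "mt N dl v i = ?M * fT ?p ?k ?M - ((?x - ?s) * (?g * (1 - ?x)) + fJ ?p ?x ?k ?M)"
      using slice_top_act(2)[of ?x "v i" dl ?s N "kx N v i"] xM i act by (simp add: mt_def)
    have mti2: "mt N dl v i = ?M powr ?a / real N + (real N - 1) * (?x powr ?a / real N)
       + ?k / 2 * ((1 - ?x)^2 - (1 - ?M^2)) - (?x - ?s) * (?g * (1 - ?x))"
    proof -
      have "?M * fT ?p ?k ?M = ?M powr ?a - ?k * ?M * (1 - ?M)"
        using powr_aN[OF N M(1)] by (simp add: fT_def algebra_simps)
      moreover have "?M powr ?a - ?k * ?M * (1 - ?M) - ((?M powr ?a - ?x powr ?a) * (real N - 1) / real N + ?k * ((1 - ?M)^2 - (1 - ?x)^2) / 2)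
         = ?M powr ?a / real N + (real N - 1) * (?x powr ?a / real N) + ?k / 2 * ((1 - ?x)^2 - (1 - ?M^2))"
        using alg1[of "real N"] N by simp
      ultimately show ?thesis unfolding mti fJ_aN[OF N] by linarith
    qed
    have phsum: "(\<Sum>j<N. ph N (v j)) = ?M powr ?a / real N + (\<Sum>j\<in>{..<N} - {i}. v j powr ?a / real N)"
      using sum_split_one[OF i(1), of "\<lambda>j. ph N (v j)"] i by (simp add: ph_def)
    define S where "S = (\<Sum>j\<in>{..<N} - {i}. (?x powr ?a - v j powr ?a) / real N)"
    have xsum: "(real N - 1) * (?x powr ?a / real N) = (\<Sum>j\<in>{..<N} - {i}. ?x powr ?a / real N)"
      using i N by (simp add: of_nat_diff)
    have S_eq: "(real N - 1) * (?x powr ?a / real N) - (\<Sum>j\<in>{..<N} - {i}. v j powr ?a / real N) = S"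
      unfolding xsum S_def by (simp add: sum_subtractf diff_divide_distrib)
    have Sterm: "0 \<le> (?x powr ?a - v j powr ?a) / real N" if "j \<in> {..<N} - {i}" for j
    proof -
      have "v j powr ?a \<le> ?x powr ?a" using le_x[of j] that rng[of j] p by (intro powr_mono2) (auto simp: aN_def)
      then show ?thesis by simp
    qed
    have S0: "0 \<le> S" unfolding S_def using Sterm by (intro sum_nonneg) auto
    have S1: "(?x powr ?a - ?s powr ?a) / real N \<le> S"
    proof -
      have "(?x powr ?a - v j1 powr ?a) / real N \<le> S"
        unfolding S_def using Sterm j1 by (intro member_le_sum) auto
      then show ?thesis using j1 by simp
    qed
    define f where "f = ?g / 4 * (?M^2 - 4 * ?x * ?M + ?x^2 + 2 * ?x)"
    have rent: "2 * (?g * (?x - ?s)) \<le> ((?x powr ?a - ?s powr ?a) / real N) / 2"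
    proof -
      have "(?x - ?s) * ?x powr ?p \<le> ?x powr ?a - ?s powr ?a" using gap_lower[OF N x0(1) sx_le] .
      moreover have "dl powr ?p \<le> ?x powr ?p" using xdl dl p by (intro powr_mono2) auto
      ultimately have "(?x - ?s) * dl powr ?p \<le> ?x powr ?a - ?s powr ?a"
        using sx_le by (smt (verit) mult_left_mono)
      moreover have "(?x - ?s) * (4 * real N * ?g) \<le> (?x - ?s) * dl powr ?p"
        using g4 sx_le by (intro mult_left_mono) auto
      ultimately have "4 * real N * (?g * (?x - ?s)) \<le> ?x powr ?a - ?s powr ?a" by (simp add: algebra_simps)
      then show ?thesis using N by (simp add: field_simps)
    qed
    have c1: "- ((?x - ?s) * (?g * (1 - ?x))) \<ge> - (?g * (?x - ?s))"
    proof -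
      have "?g * (1 - ?x) \<le> ?g" using g x0 by (simp add: mult_left_le algebra_simps)
      then have "(?x - ?s) * (?g * (1 - ?x)) \<le> (?x - ?s) * ?g" using sx_le by (intro mult_left_mono) auto
      then show ?thesis by (simp add: algebra_simps)
    qed
    have c2: "?s * (?g * (1 - ?M)) \<ge> ?g * ?x * (1 - ?M) - ?g * (?x - ?s)"
    proof -
      have "?g * (?x - ?s) * (1 - ?M) \<le> ?g * (?x - ?s)" using g sx_le M by (simp add: mult_left_le)
      moreover have "?s * (?g * (1 - ?M)) = ?g * ?x * (1 - ?M) - ?g * (?x - ?s) * (1 - ?M)" by (simp add: algebra_simps)
      ultimately show ?thesis by linarith
    qed
    have fe: "f = ?g * ?x * (1 - ?M) + ?k / 2 * ((1 - ?x)^2 - (1 - ?M^2))"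
      unfolding f_def kg by (simp add: power2_eq_square algebra_simps)
    have main: "?M powr ?a / real N + (\<Sum>j\<in>{..<N} - {i}. v j powr ?a / real N) + (S / 2 + f) \<le> mt N dl v i + mt N dl v j0"
      using mti2 mt_j0 act c1 c2 fe S_eq rent S1 by simp
    have key: "(\<Sum>j<N. et N dl (v j)) \<le> S / 2 + f"
    proof -
      have f0: "0 \<le> f" unfolding f_def using poly_f(1)[of ?x ?M] x0 xM M g by simp
      show ?thesis
      proof (cases "\<exists>j<N. dl < v j \<and> v j \<le> 1/2")
        case False
        then have "(\<Sum>j<N. et N dl (v j)) \<le> 0" using sum_et_bound(2)[OF N dl(1) dl1, of v] by blast
        then show ?thesis using S0 f0 by linarith
      next
        case True
        then obtain j2 where j2: "j2 < N" "dl < v j2" "v j2 \<le> 1/2" by blast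
        have eb: "(\<Sum>j<N. et N dl (v j)) \<le> real N * ?b" using sum_et_bound(1)[OF N dl(1) dl1] .
        show ?thesis
        proof (cases "?x \<le> 3/4")
          case True
          have "dl / 2 \<le> ?M^2 - 4 * ?x * ?M + ?x^2 + 2 * ?x"
          proof (cases "?x \<le> 1/2")
            case True then show ?thesis using poly_f(2)[of ?x ?M] x0 xM M xdl by simp
          next
            case False
            then have "(1 - ?x)^2 \<le> ?M^2 - 4 * ?x * ?M + ?x^2 + 2 * ?x" using poly_f(3)[of ?x ?M] x0 xM M by simp
            moreover have "1/16 \<le> (1 - ?x)^2"
            proof -
              have "(1/4::real)^2 \<le> (1 - ?x)^2" using True by (intro power_mono) auto
              then show ?thesis by (simp add: power2_eq_square)
            qed
            ultimately show ?thesis using dl by simp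
          qed
          then have "?g / 4 * (dl / 2) \<le> ?g / 4 * (?M^2 - 4 * ?x * ?M + ?x^2 + 2 * ?x)"
            using g by (intro mult_left_mono) auto
          then have "?g * dl / 8 \<le> f" unfolding f_def by simp
          then show ?thesis using eb bbf(4) S0 by linarith
        next
          case False
          have j2i: "j2 \<noteq> i" using j2 i False xM by auto
          have "3/16 \<le> ?x powr ?a - v j2 powr ?a"
            using far_gap[OF N, of "v j2" ?x] j2 rng[OF j2(1)] False mx_range[OF v N i(1)] by auto
          moreover have "(?x powr ?a - v j2 powr ?a) / real N \<le> S"
            unfolding S_def using Sterm j2 j2i by (intro member_le_sum) auto
          ultimately have "3 / (16 * real N) \<le> S" using N by (simp add: field_simps)
          then show ?thesis using eb bbf(5) f0 by (simp add: field_simps)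
        qed
      qed
    qed
    have "(\<Sum>j<N. ph N (v j) + et N dl (v j)) = (\<Sum>j<N. ph N (v j)) + (\<Sum>j<N. et N dl (v j))"
      by (simp add: sum.distrib)
    also have "\<dots> \<le> mt N dl v i + mt N dl v j0" using key main phsum by linarith
    also have "\<dots> \<le> (\<Sum>j<N. mt N dl v j)" using Rge .
    finally show ?thesis .
  next
    case nact: False
    show ?thesis
    proof (cases "dl \<le> ?x")
      case mid: True
      have mti: "mt N dl v i = ?M powr ?a / real N + (real N - 1) * (?x powr ?a / real N)"
      proof -
        have "mt N dl v i = ?M * ?M powr ?p - fJ ?p ?x 0 ?M"
          using slice_top_mid(2)[of ?x "v i" dl ?s N "kx N v i"] xM i nact mid by (simp add: mt_def)
        then show ?thesis unfolding fJ_aN[OF N] using powr_aN[OF N M(1)] N by (simp add: field_simps)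
      qed
      have rest: "(\<Sum>j\<in>{..<N} - {i, j0}. ph N (v j) + et N dl (v j)) \<le> 0"
      proof -
        have "ph N (v j) + et N dl (v j) \<le> 0" if "j \<in> {..<N} - {i, j0}" for j
          using ph_et_low[OF N, of "v j" dl] le_s[of j] that rng[of j] nact by auto
        then show ?thesis by (intro sum_nonpos) auto
      qed
      have phx: "ph N ?x + et N dl ?x \<le> ?x powr ?a / real N + ?b"
        using et_le_bb[OF N dl(1) dl1] by (simp add: ph_def)
      have "2 * ?b \<le> ?x powr ?a * (real N - 2) / real N"
      proof -
        have "dl powr ?a \<le> ?x powr ?a" using mid dl N by (intro powr_mono2) (auto simp: aN_def)
        moreover have "1/3 \<le> (real N - 2) / real N" using N by (simp add: field_simps)
        ultimately have "dl powr ?a * (1/3) \<le> ?x powr ?a * ((real N - 2) / real N)"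
          using dl by (intro mult_mono) auto
        then have "dl powr ?a / 3 \<le> ?x powr ?a * (real N - 2) / real N" by simp
        then show ?thesis using bbf(3) by linarith
      qed
      moreover have "(real N - 1) * (?x powr ?a / real N) = ?x powr ?a / real N + ?x powr ?a * (real N - 2) / real N"
        using N by (simp add: field_simps)
      ultimately have "?M powr ?a / real N + ?b + (?x powr ?a / real N + ?b) \<le> mt N dl v i"
        unfolding mti by linarith
      then show ?thesis using split2 rest phM phx Rnn by linarith
    next
      case low: False
      have rest: "(\<Sum>j\<in>{..<N} - {i}. ph N (v j) + et N dl (v j)) \<le> 0"
      proof -
        have "ph N (v j) + et N dl (v j) \<le> 0" if "j \<in> {..<N} - {i}" for j
          using ph_et_low[OF N, of "v j" dl] le_x[of j] that rng[of j] low by auto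
        then show ?thesis by (intro sum_nonpos) auto
      qed
      have split1: "(\<Sum>j<N. ph N (v j) + et N dl (v j)) = (ph N ?M + et N dl ?M) + (\<Sum>j\<in>{..<N} - {i}. ph N (v j) + et N dl (v j))"
        using sum_split_one[OF i(1), of "\<lambda>j. ph N (v j) + et N dl (v j)"] i by simp
      show ?thesis
      proof (cases "?M < dl")
        case True
        have "ph N ?M + et N dl ?M \<le> 0" using ph_et_low[OF N, of ?M dl] M True by simp
        moreover have "0 \<le> mt N dl v i"
          using slice_top_low(2)[of ?x "v i" dl ?s N "kx N v i"] xM i low sx_le True by (simp add: mt_def)
        ultimately show ?thesis using split1 rest Rnn by linarith
      next
        case False
        have mti: "mt N dl v i = ?M powr ?a / real N + dl powr ?a / ?a"
        proof -
          have "mt N dl v i = ?M * ?M powr ?p - fJ ?p dl 0 ?M"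
            using slice_top_low(2)[of ?x "v i" dl ?s N "kx N v i"] xM i low sx_le False by (simp add: mt_def)
          then show ?thesis unfolding fJ_aN[OF N] aN_inv[OF N] using powr_aN[OF N M(1)] N
            by (simp add: field_simps)
        qed
        then show ?thesis using split1 rest Rnn phM bbf(2) by linarith
      qed
    qed
  qed
qed

section \<open>Revenue bound: tie at the top\<close>

lemma rev_tie:
  assumes N: "N \<ge> 3" and dl: "0 < dl" "dl \<le> 1/8" and v: "v \<in> profiles N"
    and i: "i < N" "v i = top_val N v" and i': "i' < N" "i' \<noteq> i" "v i' = top_val N v"
  shows "(\<Sum>j<N. ph N (v j) + et N dl (v j)) \<le> (\<Sum>j<N. mt N dl v j)"
proof -
  have dl1: "dl \<le> 1" using dl by simp
  let ?M = "top_val N v" and ?s = "sx N v i"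
  let ?p = "pN N" and ?a = "aN N" and ?g = "g1 N dl" and ?k = "k0 N dl" and ?b = "bb N dl"
  let ?T = "fT ?p ?k ?M"
  define A where "A = {j\<in>{..<N}. v j = ?M}"
  define K where "K = real (card A)"
  have p: "0 < ?p" "?p \<le> 1" using pN_pos[OF N] pN_le1[OF N] by auto
  have g: "0 < ?g" using g1_bounds[OF N dl(1)] by auto
  have g4: "4 * real N * ?g \<le> dl powr ?p"
  proof -
    have "4 * real N * ?g = dl powr ?p / (real N - 1)" using N by (simp add: g1_def field_simps)
    also have "\<dots> \<le> dl powr ?p" using N by (simp add: divide_le_eq mult_le_cancel_left1)
    finally show ?thesis .
  qed
  note bbf = bb_facts[OF N dl(1) dl1]
  have rng: "\<And>j. j < N \<Longrightarrow> 0 \<le> v j \<and> v j \<le> 1" using profile_range[OF v] by auto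
  have M: "0 \<le> ?M" "?M \<le> 1" using rng[OF i(1)] i by auto
  have AI: "A \<subseteq> {..<N}" "finite A" unfolding A_def by auto
  have iA: "i \<in> A" "i' \<in> A" using i i' by (auto simp: A_def)
  have mxj: "\<And>j. j < N \<Longrightarrow> mx N v j = ?M" using tie_mx[OF N i(1) i'(1) i'(2)[symmetric] i(2) i'(3)] .
  have sch: "?s = Max (v ` ({..<N} - {i, i'}))"
    using sx_char[OF N i(1) i'(1) i'(2)] mxj[OF i(1)] i' by simp
  have le_s: "v j \<le> ?s" if "j < N" "j \<noteq> i" "j \<noteq> i'" for j
    unfolding sch using that by (intro Max_ge) auto
  have sM: "?s \<le> ?M" using sx_le_mx[OF N i(1), of v] mxj[OF i(1)] by simp
  have s0: "0 \<le> ?s" using sx_range[OF v N i(1)] by simp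
  have sA: "sx N v j = ?s" if "j \<in> A" for j
  proof (cases "j = i")
    case False
    have j: "j < N" "v j = ?M" using that by (auto simp: A_def)
    have "sx N v j = Max (v ` ({..<N} - {j, i}))"
      using sx_char[OF N j(1) i(1) False[symmetric]] mxj[OF j(1)] i by simp
    moreover have "?s = Max (v ` ({..<N} - {i, j}))"
      using sx_char[OF N i(1) j(1) False] mxj[OF i(1)] j by simp
    moreover have "{..<N} - {j, i} = {..<N} - {i, j}" by auto
    ultimately show ?thesis by simp
  qed simp
  have A2: "A = {i, i'}" if "?s < ?M"
  proof
    show "A \<subseteq> {i, i'}"
    proof
      fix k assume k: "k \<in> A"
      show "k \<in> {i, i'}"
      proof (rule ccontr)
        assume "k \<notin> {i, i'}"
        then have "v k \<le> ?s" using le_s[of k] k by (auto simp: A_def)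
        then show False using k that by (auto simp: A_def)
      qed
    qed
  qed (use iA in auto)
  have K2: "K = 2" if "?s < ?M" using A2[OF that] i'(2) by (simp add: K_def)
  have mt_out: "mt N dl v j = 0" if "j < N" "j \<notin> A" for j
  proof -
    have jn: "v j \<noteq> ?M" using that by (auto simp: A_def)
    have jne: "j \<noteq> i" "j \<noteq> i'" using jn i i' by auto
    have sx: "sx N v j = ?M" using tie_sx[OF N i(1) i'(1) i'(2)[symmetric] i(2) i'(3) that(1) jne] .
    have "v j < mx N v j" using mxj[OF that(1)] tv_ge[of j N v] jn that by auto
    then show ?thesis using slice_nontop(2)[of "v j" "mx N v j" dl N "sx N v j" "kx N v j"] dl that sx mxj[OF that(1)]
      by (simp add: mt_def)
  qed
  define t0 where "t0 = (if dl \<le> ?s then ?M * (?T * (2 - ?T) / K) - (?M - ?s) * (?g * (1 - ?M))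
             else if dl \<le> ?M then ?M * (?M powr ?p / K) else 0)"
  have mt_in: "mt N dl v j = t0" if "j \<in> A" for j
  proof -
    have j: "j < N" "v j = ?M" using that by (auto simp: A_def)
    have K: "kx N v j = K" using tie_kx[OF N j mxj[OF j(1)]] by (simp add: K_def A_def)
    show ?thesis using slice_tie(2)[of "v j" "mx N v j" N dl "sx N v j" "kx N v j"] j mxj[OF j(1)] K sA[OF that]
      by (simp add: mt_def t0_def)
  qed
  have Kpos: "0 < K" using iA AI by (auto simp: K_def card_gt_0_iff)
  have R: "(\<Sum>j<N. mt N dl v j) = K * t0"
  proof -
    have "(\<Sum>j<N. mt N dl v j) = (\<Sum>j\<in>{..<N} - A. mt N dl v j) + (\<Sum>j\<in>A. mt N dl v j)"
      using AI by (simp add: sum.subset_diff)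
    also have "(\<Sum>j\<in>{..<N} - A. mt N dl v j) = 0" using mt_out by (intro sum.neutral) auto
    also have "(\<Sum>j\<in>A. mt N dl v j) = (\<Sum>j\<in>A. t0)" using mt_in by (intro sum.cong) auto
    finally show ?thesis by (simp add: K_def)
  qed
  have split2: "(\<Sum>j<N. ph N (v j) + et N dl (v j)) = (ph N ?M + et N dl ?M) + (ph N ?M + et N dl ?M)
      + (\<Sum>j\<in>{..<N} - {i, i'}. ph N (v j) + et N dl (v j))"
    using sum_split_two[OF i(1) i'(1) i'(2)[symmetric], of "\<lambda>j. ph N (v j) + et N dl (v j)"] i i' by simp
  have phM: "ph N ?M + et N dl ?M \<le> ?M powr ?a / real N + ?b"
    using et_le_bb[OF N dl(1) dl1] by (simp add: ph_def)
  show ?thesis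
  proof (cases "dl \<le> ?s")
    case act: True
    have Mdl: "dl \<le> ?M" using act sM by simp
    have t0e: "K * t0 = ?M * (?T * (2 - ?T)) - K * ((?M - ?s) * (?g * (1 - ?M)))"
      using act Kpos by (simp add: t0_def field_simps)
    define S where "S = (\<Sum>j\<in>{..<N} - A. (?M powr ?a - v j powr ?a) / real N)"
    have Sterm: "0 \<le> (?M powr ?a - v j powr ?a) / real N" if "j < N" for j
    proof -
      have "v j powr ?a \<le> ?M powr ?a" using tv_ge[of j N v] that rng[of j] p by (intro powr_mono2) (auto simp: aN_def)
      then show ?thesis by simp
    qed
    have S0: "0 \<le> S" unfolding S_def using Sterm by (intro sum_nonneg) auto
    have phsum: "(\<Sum>j<N. ph N (v j)) = ?M powr ?a - S"
    proof -
      have e1: "(\<Sum>j<N. ph N (v j)) = (\<Sum>j\<in>{..<N} - A. ph N (v j)) + (\<Sum>j\<in>A. ph N (v j))"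
        using AI by (simp add: sum.subset_diff)
      have e2: "(\<Sum>j\<in>A. ph N (v j)) = (\<Sum>j\<in>A. ?M powr ?a / real N)"
        by (intro sum.cong) (auto simp: A_def ph_def)
      have e3: "(\<Sum>j\<in>{..<N} - A. ph N (v j)) = (\<Sum>j\<in>{..<N} - A. ?M powr ?a / real N) - S"
        unfolding S_def by (simp add: ph_def sum_subtractf diff_divide_distrib)
      have e4: "(\<Sum>j\<in>{..<N} - A. ?M powr ?a / real N) + (\<Sum>j\<in>A. ?M powr ?a / real N) = (\<Sum>j<N. ?M powr ?a / real N)"
        using sum.subset_diff[OF AI(1) finite_lessThan, of "\<lambda>j. ?M powr ?a / real N"] by simp
      have e5: "(\<Sum>j<N. ?M powr ?a / real N) = ?M powr ?a" using N by simp
      show ?thesis using e1 e2 e3 e4 e5 by linarith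
    qed
    have gain: "?p * dl powr ?a * (1 - ?M) / 2 \<le> ?M * (?T * (2 - ?T) - ?M powr ?p)"
      using tie_gain[OF N dl(1) dl1 Mdl M(2)] .
    have MM: "?M * ?M powr ?p = ?M powr ?a" using powr_aN[OF N M(1)] by simp
    have rent: "K * ((?M - ?s) * (?g * (1 - ?M))) \<le> S / 2"
    proof (cases "?s < ?M")
      case False
      then show ?thesis using sM S0 by simp
    next
      case True
      obtain j1 where j1: "j1 < N" "j1 \<noteq> i" "j1 \<noteq> i'" "v j1 = ?s"
      proof -
        have "Max (v ` ({..<N} - {i, i'})) \<in> v ` ({..<N} - {i, i'})"
          using ne_minus2[OF N i(1) i'(1)] by (intro Max_in) auto
        then obtain k where k: "Max (v ` ({..<N} - {i, i'})) = v k" "k \<in> {..<N} - {i, i'}" by (rule imageE)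
        have "k < N" "k \<noteq> i" "k \<noteq> i'" using k(2) by auto
        then show ?thesis using that[of k] k(1) sch by simp
      qed
      have j1A: "j1 \<notin> A" using j1 True by (auto simp: A_def)
      have "(?M powr ?a - v j1 powr ?a) / real N \<le> S"
        unfolding S_def using Sterm j1 j1A by (intro member_le_sum) auto
      then have S1: "(?M powr ?a - ?s powr ?a) / real N \<le> S" using j1 by simp
      have "(?M - ?s) * ?M powr ?p \<le> ?M powr ?a - ?s powr ?a" using gap_lower[OF N s0 sM] .
      moreover have "dl powr ?p \<le> ?M powr ?p" using Mdl dl p by (intro powr_mono2) auto
      ultimately have "(?M - ?s) * dl powr ?p \<le> ?M powr ?a - ?s powr ?a"
        using sM by (smt (verit) mult_left_mono)
      moreover have "(?M - ?s) * (4 * real N * ?g) \<le> (?M - ?s) * dl powr ?p"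
        using g4 sM by (intro mult_left_mono) auto
      ultimately have "4 * real N * (?g * (?M - ?s)) \<le> ?M powr ?a - ?s powr ?a" by (simp add: algebra_simps)
      then have r1: "2 * (?g * (?M - ?s)) \<le> ((?M powr ?a - ?s powr ?a) / real N) / 2" using N by (simp add: field_simps)
      have "?g * (1 - ?M) \<le> ?g" using g M by (simp add: mult_left_le algebra_simps)
      then have "(?M - ?s) * (?g * (1 - ?M)) \<le> (?M - ?s) * ?g" using sM by (intro mult_left_mono) auto
      then have "K * ((?M - ?s) * (?g * (1 - ?M))) \<le> 2 * (?g * (?M - ?s))" using K2[OF True] by (simp add: algebra_simps)
      moreover have "((?M powr ?a - ?s powr ?a) / real N) / 2 \<le> S / 2" using S1 by (intro divide_right_mono) auto
      ultimately show ?thesis using r1 by linarith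
    qed
    have low: "?M powr ?a - S + (S / 2 + ?p * dl powr ?a * (1 - ?M) / 2) \<le> K * t0"
      using t0e gain MM rent by (simp add: algebra_simps)
    have key: "(\<Sum>j<N. et N dl (v j)) \<le> S / 2 + ?p * dl powr ?a * (1 - ?M) / 2"
    proof -
      have G0: "0 \<le> ?p * dl powr ?a * (1 - ?M) / 2" using p M by simp
      show ?thesis
      proof (cases "\<exists>j<N. dl < v j \<and> v j \<le> 1/2")
        case False
        then have "(\<Sum>j<N. et N dl (v j)) \<le> 0" using sum_et_bound(2)[OF N dl(1) dl1, of v] by blast
        then show ?thesis using S0 G0 by linarith
      next
        case True
        then obtain j2 where j2: "j2 < N" "dl < v j2" "v j2 \<le> 1/2" by blast
        have eb: "(\<Sum>j<N. et N dl (v j)) \<le> real N * ?b" using sum_et_bound(1)[OF N dl(1) dl1] .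
        show ?thesis
        proof (cases "?M \<le> 3/4")
          case True
          have "?p * dl powr ?a * (1/4) \<le> ?p * dl powr ?a * (1 - ?M)"
            using True p by (intro mult_left_mono) auto
          then have "?p * dl powr ?a / 8 \<le> ?p * dl powr ?a * (1 - ?M) / 2" by simp
          then show ?thesis using eb bbf(6) S0 by linarith
        next
          case False
          have j2A: "j2 \<notin> A" using j2 False by (auto simp: A_def)
          have "3/16 \<le> ?M powr ?a - v j2 powr ?a"
            using far_gap[OF N, of "v j2" ?M] j2 rng[OF j2(1)] False M by auto
          moreover have "(?M powr ?a - v j2 powr ?a) / real N \<le> S"
            unfolding S_def using Sterm j2 j2A by (intro member_le_sum) auto
          ultimately have "3 / (16 * real N) \<le> S" using N by (simp add: field_simps)
          then show ?thesis using eb bbf(5) G0 by (simp add: field_simps)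
        qed
      qed
    qed
    have "(\<Sum>j<N. ph N (v j) + et N dl (v j)) = (\<Sum>j<N. ph N (v j)) + (\<Sum>j<N. et N dl (v j))"
      by (simp add: sum.distrib)
    also have "\<dots> \<le> K * t0" using phsum key low by linarith
    finally show ?thesis using R by simp
  next
    case nact: False
    have sl: "?s < ?M \<or> ?M < dl" using nact sM by linarith
    show ?thesis
    proof (cases "dl \<le> ?M")
      case mid: True
      then have sM': "?s < ?M" using nact by linarith
      have t0e: "K * t0 = ?M powr ?a" using nact mid K2[OF sM'] powr_aN[OF N M(1)] by (simp add: t0_def)
      have rest: "(\<Sum>j\<in>{..<N} - {i, i'}. ph N (v j) + et N dl (v j)) \<le> 0"
      proof -
        have "ph N (v j) + et N dl (v j) \<le> 0" if "j \<in> {..<N} - {i, i'}" for j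
          using ph_et_low[OF N, of "v j" dl] le_s[of j] that rng[of j] nact by auto
        then show ?thesis by (intro sum_nonpos) auto
      qed
      have "2 * ?b \<le> ?M powr ?a * (real N - 2) / real N"
      proof -
        have "dl powr ?a \<le> ?M powr ?a" using mid dl N by (intro powr_mono2) (auto simp: aN_def)
        moreover have "1/3 \<le> (real N - 2) / real N" using N by (simp add: field_simps)
        ultimately have "dl powr ?a * (1/3) \<le> ?M powr ?a * ((real N - 2) / real N)"
          using dl by (intro mult_mono) auto
        then have "dl powr ?a / 3 \<le> ?M powr ?a * (real N - 2) / real N" by simp
        then show ?thesis using bbf(3) by linarith
      qed
      moreover have "?M powr ?a = 2 * (?M powr ?a / real N) + ?M powr ?a * (real N - 2) / real N"
        using N by (simp add: field_simps)
      ultimately show ?thesis using split2 rest phM R t0e by linarith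
    next
      case low: False
      have t00: "t0 = 0" using nact low by (simp add: t0_def)
      have "ph N (v j) + et N dl (v j) \<le> 0" if "j < N" for j
        using ph_et_low[OF N, of "v j" dl] tv_ge[of j N v] that rng[of j] low by auto
      then have "(\<Sum>j<N. ph N (v j) + et N dl (v j)) \<le> 0" by (intro sum_nonpos) auto
      then show ?thesis using R t00 by simp
    qed
  qed
qed

lemma rev_bound:
  assumes N: "N \<ge> 3" and dl: "0 < dl" "dl \<le> 1/8" and v: "v \<in> profiles N"
  shows "(\<Sum>j<N. ph N (v j) + et N dl (v j)) \<le> (\<Sum>j<N. mt N dl v j)"
proof -
  obtain i where i: "i < N" "v i = top_val N v" using tv_attained[of N v] N by auto
  show ?thesis
  proof (cases "\<forall>j<N. j \<noteq> i \<longrightarrow> v j < top_val N v")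
    case True
    then show ?thesis using rev_unique[OF N dl v i] by blast
  next
    case False
    then obtain i' where i'0: "i' < N" "i' \<noteq> i" "\<not> v i' < top_val N v" by blast
    then have "v i' = top_val N v" using tv_ge[of i' N v] by auto
    then show ?thesis using rev_tie[OF N dl v i] i'0 by blast
  qed
qed

lemma fI_zero:
  assumes "fam_ok p s m c th k"
  shows "fI p s m c th k 0 = 0"
proof -
  from assms have "0 \<le> s" "s \<le> m" by (auto simp: fam_ok_def)
  then show ?thesis by (cases "0 < m"; cases "s = 0") (auto simp: fI_def fJ_m)
qed

lemma mt_abs:
  assumes N: "N \<ge> 3" and dl: "0 < dl" "dl \<le> 1" and v: "v \<in> profiles N"
  shows "\<bar>mt N dl v i\<bar> \<le> 2"
proof (cases "i < N")
  case i: True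
  note ok = slice_ok[OF N dl v i]
  have u: "0 \<le> v i" "v i \<le> 1" using profile_range[OF v i] by auto
  have q: "0 \<le> mq N dl v i" "mq N dl v i \<le> 1" using mq_bounds[OF N dl v i] by auto
  let ?Q = "slQ N dl (mx N v i) (sx N v i) (kx N v i) (v i)"
  let ?I = "slI N dl (mx N v i) (sx N v i) (kx N v i) (v i)"
  have Qe: "mq N dl v i = ?Q" using i by (simp add: mq_def)
  have te: "mt N dl v i = v i * ?Q - ?I" using i by (simp add: mt_def)
  have I0: "0 \<le> ?I" using fam_I_nonneg[OF ok u(1)] by (simp add: slI_def)
  have I1: "?I \<le> v i * ?Q"
    using fam_incr(2)[OF ok order_refl u(1)] fI_zero[OF ok] by (simp add: slI_def slQ_def)
  have uq: "0 \<le> v i * ?Q" "v i * ?Q \<le> 1" using q u Qe by (auto intro: mult_le_one)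
  show ?thesis using te I0 I1 uq by simp
qed (simp add: mt_def)

section \<open>Measure-theoretic part\<close>

lemma cdfF_props:
  assumes F: "cdf_on_unit_with_full_support F"
  shows "\<And>x y. x \<le> y \<Longrightarrow> F x \<le> F y" "\<And>a. continuous (at_right a) F"
    "(F \<longlongrightarrow> 0) at_bot" "(F \<longlongrightarrow> 1) at_top"
    "\<And>x. x < 0 \<Longrightarrow> F x = 0" "\<And>x. 1 \<le> x \<Longrightarrow> F x = 1"
    "\<And>x e. x \<in> {0..1} \<Longrightarrow> 0 < e \<Longrightarrow> F (x - e) < F (x + e)"
proof -
  from F show mono: "\<And>x y. x \<le> y \<Longrightarrow> F x \<le> F y" by (auto simp: cdf_on_unit_with_full_support_def mono_def)
  from F show "\<And>a. continuous (at_right a) F" by (auto simp: cdf_on_unit_with_full_support_def)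
  from F show z: "\<And>x. x < 0 \<Longrightarrow> F x = 0" by (auto simp: cdf_on_unit_with_full_support_def)
  from F show o: "\<And>x. 1 \<le> x \<Longrightarrow> F x = 1" by (auto simp: cdf_on_unit_with_full_support_def)
  from F show "\<And>x e. x \<in> {0..1} \<Longrightarrow> 0 < e \<Longrightarrow> F (x - e) < F (x + e)"
    by (auto simp: cdf_on_unit_with_full_support_def)
  have "eventually (\<lambda>x. F x = 0) at_bot"
    unfolding eventually_at_bot_linorder by (rule exI[of _ "-1"]) (auto intro: z)
  then show "(F \<longlongrightarrow> 0) at_bot" by (rule tendsto_eventually)
  have "eventually (\<lambda>x. F x = 1) at_top"
    unfolding eventually_at_top_linorder by (rule exI[of _ 1]) (auto intro: o)
  then show "(F \<longlongrightarrow> 1) at_top" by (rule tendsto_eventually)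
qed

lemma muF:
  assumes F: "cdf_on_unit_with_full_support F"
  shows "real_distribution (interval_measure F)" "cdf (interval_measure F) = F"
  using real_distribution_interval_measure[OF cdfF_props(1,2,3,4)[OF F]]
    cdf_interval_measure[OF cdfF_props(1,2,3)[OF F]] by auto

lemma PiF_basic:
  assumes "\<pi> \<in> Pi_F N F"
  shows "prob_space \<pi>" "sets \<pi> = sets (profile_space N)" "space \<pi> = space (profile_space N)"
    "\<And>i x. i < N \<Longrightarrow> measure \<pi> {v \<in> space \<pi>. v i \<le> x} = F x"
  using assms sets_eq_imp_space_eq[of \<pi> "profile_space N"] by (auto simp: Pi_F_def)

lemma PiF_coord_meas:
  assumes "\<pi> \<in> Pi_F N F" "i < N"
  shows "(\<lambda>v. v i) \<in> borel_measurable \<pi>"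
  using meas_coord[OF assms(2)] measurable_cong_sets[OF PiF_basic(2)[OF assms(1)] refl] by blast

lemma PiF_marg:
  assumes F: "cdf_on_unit_with_full_support F" and pi: "\<pi> \<in> Pi_F N F" and i: "i < N"
  shows "distr \<pi> borel (\<lambda>v. v i) = interval_measure F"
proof (rule cdf_unique)
  interpret prob_space \<pi> using PiF_basic(1)[OF pi] .
  have meas: "(\<lambda>v. v i) \<in> borel_measurable \<pi>" using PiF_coord_meas[OF pi i] .
  show "real_distribution (distr \<pi> borel (\<lambda>v. v i))" using meas by simp
  show "real_distribution (interval_measure F)" using muF(1)[OF F] .
  show "cdf (distr \<pi> borel (\<lambda>v. v i)) = cdf (interval_measure F)"
  proof
    fix x
    have "cdf (distr \<pi> borel (\<lambda>v. v i)) x = measure \<pi> ((\<lambda>v. v i) -` {..x} \<inter> space \<pi>)"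
      unfolding cdf_def using meas by (simp add: measure_distr)
    also have "(\<lambda>v. v i) -` {..x} \<inter> space \<pi> = {v \<in> space \<pi>. v i \<le> x}" by auto
    also have "measure \<pi> \<dots> = F x" using PiF_basic(4)[OF pi i] .
    finally show "cdf (distr \<pi> borel (\<lambda>v. v i)) x = cdf (interval_measure F) x"
      using muF(2)[OF F] by simp
  qed
qed

lemma PiF_AE_profiles:
  assumes F: "cdf_on_unit_with_full_support F" and pi: "\<pi> \<in> Pi_F N F"
  shows "AE v in \<pi>. v \<in> profiles N"
proof -
  interpret prob_space \<pi> using PiF_basic(1)[OF pi] .
  have sp: "space \<pi> = PiE {..<N} (\<lambda>_. UNIV)" using PiF_basic(3)[OF pi] by (simp add: profile_space_def space_PiM)
  have coord: "AE v in \<pi>. 0 \<le> v i \<and> v i \<le> 1" if i: "i < N" for i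
  proof -
    have meas: "(\<lambda>v. v i) \<in> borel_measurable \<pi>" using PiF_coord_meas[OF pi i] .
    have up: "AE v in \<pi>. v i \<le> 1"
    proof -
      have "prob {v \<in> space \<pi>. v i \<le> 1} = 1" using PiF_basic(4)[OF pi i, of 1] cdfF_props(6)[OF F, of 1] by simp
      from AE_prob_1[OF this] show ?thesis by auto
    qed
    have lo: "AE v in \<pi>. 0 \<le> v i"
    proof -
      let ?B = "\<lambda>n::nat. {v \<in> space \<pi>. v i \<le> - 1 / real (Suc n)}"
      have Bs: "range ?B \<subseteq> sets \<pi>" using meas by auto
      have B0: "emeasure \<pi> (?B n) = 0" for n
      proof -
        have "measure \<pi> (?B n) = F (- 1 / real (Suc n))" using PiF_basic(4)[OF pi i] .
        also have "\<dots> = 0" using cdfF_props(5)[OF F] by simp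
        finally show ?thesis using Bs by (simp add: emeasure_eq_measure)
      qed
      have U: "emeasure \<pi> (\<Union>n. ?B n) = 0" by (rule emeasure_UN_eq_0[OF B0 Bs])
      have sub: "{v \<in> space \<pi>. \<not> 0 \<le> v i} \<subseteq> (\<Union>n. ?B n)"
      proof
        fix v assume v: "v \<in> {v \<in> space \<pi>. \<not> 0 \<le> v i}"
        then have neg: "v i < 0" by simp
        obtain n where "inverse (real (Suc n)) < - v i" using reals_Archimedean[of "- v i"] neg by auto
        then have "1 / real (Suc n) < - v i" by (simp add: inverse_eq_divide)
        then show "v \<in> (\<Union>n. ?B n)" using v by (auto intro!: exI[of _ n])
      qed
      show ?thesis
        by (rule AE_I[OF sub]) (use U Bs in \<open>auto intro: sets.countable_UN\<close>)
    qed
    show ?thesis using up lo by eventually_elim auto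
  qed
  have "AE v in \<pi>. \<forall>i\<in>{..<N}. 0 \<le> v i \<and> v i \<le> 1" by (rule AE_finite_allI) (use coord in auto)
  then show ?thesis
  proof (rule AE_mp[OF _ AE_I2])
    fix v assume "v \<in> space \<pi>"
    then show "(\<forall>i\<in>{..<N}. 0 \<le> v i \<and> v i \<le> 1) \<longrightarrow> v \<in> profiles N"
      using sp by (auto simp: profiles_def PiE_def Pi_def)
  qed
qed

lemma int_comp:
  fixes g :: "real \<Rightarrow> real" and B :: real
  assumes F: "cdf_on_unit_with_full_support F" and pi: "\<pi> \<in> Pi_F N F" and i: "i < N"
    and g: "g \<in> borel_measurable borel" and B: "\<And>x. 0 \<le> x \<Longrightarrow> x \<le> 1 \<Longrightarrow> \<bar>g x\<bar> \<le> B"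
  shows "integrable \<pi> (\<lambda>v. g (v i))" "integral\<^sup>L \<pi> (\<lambda>v. g (v i)) = integral\<^sup>L (interval_measure F) g"
proof -
  interpret prob_space \<pi> using PiF_basic(1)[OF pi] .
  have meas: "(\<lambda>v. v i) \<in> borel_measurable \<pi>" using PiF_coord_meas[OF pi i] .
  have gm: "(\<lambda>v. g (v i)) \<in> borel_measurable \<pi>" using measurable_compose[OF meas g] by simp
  have "AE v in \<pi>. norm (g (v i)) \<le> B"
    using PiF_AE_profiles[OF F pi] by eventually_elim (use B profile_range i in auto)
  then show "integrable \<pi> (\<lambda>v. g (v i))" using gm by (intro integrable_const_bound) auto
  have "integral\<^sup>L (distr \<pi> borel (\<lambda>v. v i)) g = integral\<^sup>L \<pi> (\<lambda>v. g (v i))"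
    by (rule integral_distr[OF meas g])
  then show "integral\<^sup>L \<pi> (\<lambda>v. g (v i)) = integral\<^sup>L (interval_measure F) g"
    using PiF_marg[OF F pi i] by simp
qed

lemma ph_meas[measurable]: "ph N \<in> borel_measurable borel"
  unfolding ph_def by measurable

lemma et_meas[measurable]: "et N dl \<in> borel_measurable borel"
  unfolding et_def by measurable

lemma ph_bound: "N \<ge> 3 \<Longrightarrow> 0 \<le> x \<Longrightarrow> x \<le> 1 \<Longrightarrow> \<bar>ph N x\<bar> \<le> 1"
proof -
  assume N: "N \<ge> 3" and x: "0 \<le> x" "x \<le> 1"
  have "x powr aN N \<le> 1" using x N by (intro powr_le1) (auto simp: aN_def)
  moreover have "0 \<le> ph N x" by (simp add: ph_def)
  ultimately show ?thesis using N by (simp add: ph_def divide_le_eq)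
qed

lemma et_bound:
  assumes N: "N \<ge> 3" and dl: "0 < dl" "dl \<le> 1"
  shows "\<bar>et N dl x\<bar> \<le> 1"
proof -
  have d: "dl powr aN N \<le> 1" using dl N by (intro powr_le1) (auto simp: aN_def)
  have d2: "dl powr aN N / real N \<le> 1" using d N by (simp add: divide_le_eq)
  have b: "bb N dl \<le> 1" using bb_facts(3)[OF N dl] d by simp
  show ?thesis using bb_facts(1)[OF N dl] b d2 by (auto simp: et_def)
qed

lemma G_bound:
  assumes N: "N \<ge> 3" and dl: "0 < dl" "dl \<le> 1" and x: "0 \<le> x" "x \<le> 1"
  shows "\<bar>ph N x + et N dl x\<bar> \<le> 2"
  using ph_bound[OF N x] et_bound[OF N dl, of x] by simp

lemma rev_lower:
  assumes N: "N \<ge> 3" and dl: "0 < dl" "dl \<le> 1/8" and F: "cdf_on_unit_with_full_support F" and pi: "\<pi> \<in> Pi_F N F"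
  shows "integrable \<pi> (\<lambda>v. \<Sum>i<N. mt N dl v i)"
    "real N * integral\<^sup>L (interval_measure F) (\<lambda>x. ph N x + et N dl x) \<le> revenue N (mt N dl) \<pi>"
proof -
  have dl1: "dl \<le> 1" using dl by simp
  interpret prob_space \<pi> using PiF_basic(1)[OF pi] .
  have sets: "sets \<pi> = sets (profile_space N)" using PiF_basic(2)[OF pi] .
  have mti: "(\<lambda>v. mt N dl v i) \<in> borel_measurable \<pi>" if "i < N" for i
    by (subst measurable_cong_sets[OF sets refl]) (rule meas_mt[OF that])
  have mtm: "(\<lambda>v. \<Sum>i<N. mt N dl v i) \<in> borel_measurable \<pi>"
    using mti by (intro borel_measurable_sum) auto
  have "AE v in \<pi>. norm (\<Sum>i<N. mt N dl v i) \<le> 2 * real N"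
    using PiF_AE_profiles[OF F pi]
  proof eventually_elim
    case (elim v)
    have "norm (\<Sum>i<N. mt N dl v i) \<le> (\<Sum>i<N. \<bar>mt N dl v i\<bar>)" by (simp add: sum_abs)
    also have "\<dots> \<le> (\<Sum>i<N. 2)" using mt_abs[OF N dl(1) dl1 elim] by (intro sum_mono) auto
    finally show ?case by simp
  qed
  then show int_mt: "integrable \<pi> (\<lambda>v. \<Sum>i<N. mt N dl v i)" using mtm by (intro integrable_const_bound) auto
  let ?G = "\<lambda>x. ph N x + et N dl x"
  have Gm: "?G \<in> borel_measurable borel" by measurable
  have Gi: "integrable \<pi> (\<lambda>v. ?G (v i))" "integral\<^sup>L \<pi> (\<lambda>v. ?G (v i)) = integral\<^sup>L (interval_measure F) ?G"
    if "i < N" for i using int_comp[OF F pi that Gm G_bound[OF N dl(1) dl1]] by auto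
  have int_G: "integrable \<pi> (\<lambda>v. \<Sum>i<N. ?G (v i))"
    by (rule Bochner_Integration.integrable_sum) (use Gi in auto)
  have "integral\<^sup>L \<pi> (\<lambda>v. \<Sum>i<N. ?G (v i)) = (\<Sum>i<N. integral\<^sup>L \<pi> (\<lambda>v. ?G (v i)))"
    by (rule Bochner_Integration.integral_sum) (use Gi in auto)
  also have "\<dots> = (\<Sum>i<N. integral\<^sup>L (interval_measure F) ?G)" using Gi by (intro sum.cong) auto
  also have "\<dots> = real N * integral\<^sup>L (interval_measure F) ?G" by simp
  finally have eq: "integral\<^sup>L \<pi> (\<lambda>v. \<Sum>i<N. ?G (v i)) = real N * integral\<^sup>L (interval_measure F) ?G" .
  have "integral\<^sup>L \<pi> (\<lambda>v. \<Sum>i<N. ?G (v i)) \<le> integral\<^sup>L \<pi> (\<lambda>v. \<Sum>i<N. mt N dl v i)"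
  proof (rule integral_mono_AE[OF int_G int_mt])
    show "AE v in \<pi>. (\<Sum>i<N. ?G (v i)) \<le> (\<Sum>i<N. mt N dl v i)"
      using PiF_AE_profiles[OF F pi] by eventually_elim (use rev_bound[OF N dl] in auto)
  qed
  then show "real N * integral\<^sup>L (interval_measure F) ?G \<le> revenue N (mt N dl) \<pi>"
    using eq by (simp add: revenue_def)
qed

definition diag :: "nat \<Rightarrow> real \<Rightarrow> (nat \<Rightarrow> real)" where "diag N x = (\<lambda>i\<in>{..<N}. x)"
definition pi0 :: "nat \<Rightarrow> (real \<Rightarrow> real) \<Rightarrow> (nat \<Rightarrow> real) measure" where
  "pi0 N F = distr (interval_measure F) (profile_space N) (diag N)"

lemma diag_meas: "diag N \<in> measurable borel (profile_space N)"
  unfolding diag_def profile_space_def by (intro measurable_restrict) auto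

lemma diag_meas': "diag N \<in> measurable (interval_measure F) (profile_space N)"
  using diag_meas measurable_cong_sets[OF sets_interval_measure refl] by blast

lemma coord_set:
  assumes "i < N"
  shows "{v \<in> space (profile_space N). v i \<le> x} \<in> sets (profile_space N)"
proof -
  have "(\<lambda>v. v i) -` {..x} \<inter> space (profile_space N) \<in> sets (profile_space N)"
    by (rule measurable_sets[OF meas_coord[OF assms]]) auto
  moreover have "(\<lambda>v. v i) -` {..x} \<inter> space (profile_space N) = {v \<in> space (profile_space N). v i \<le> x}" by auto
  ultimately show ?thesis by simp
qed

lemma pi0_in:
  assumes F: "cdf_on_unit_with_full_support F"
  shows "pi0 N F \<in> Pi_F N F"
proof -
  interpret real_distribution "interval_measure F" using muF(1)[OF F] .
  have ps: "prob_space (pi0 N F)" unfolding pi0_def by (rule prob_space_distr[OF diag_meas'])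
  have st: "sets (pi0 N F) = sets (profile_space N)" by (simp add: pi0_def)
  have mg: "measure (pi0 N F) {v \<in> space (pi0 N F). v i \<le> x} = F x" if i: "i < N" for i x
  proof -
    have sp: "space (pi0 N F) = space (profile_space N)" by (simp add: pi0_def)
    have "measure (pi0 N F) {v \<in> space (pi0 N F). v i \<le> x}
        = measure (interval_measure F) (diag N -` {v \<in> space (profile_space N). v i \<le> x} \<inter> space (interval_measure F))"
      unfolding sp unfolding pi0_def by (rule measure_distr[OF diag_meas' coord_set[OF i]])
    also have "diag N -` {v \<in> space (profile_space N). v i \<le> x} \<inter> space (interval_measure F) = {..x}"
    proof -
      have "diag N y \<in> space (profile_space N)" for y using measurable_space[OF diag_meas, of y] by simp
      moreover have "diag N y i = y" for y using i by (simp add: diag_def)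
      ultimately show ?thesis by auto
    qed
    also have "measure (interval_measure F) {..x} = F x" using fun_cong[OF muF(2)[OF F], of x] by (simp add: cdf_def2)
    finally show ?thesis .
  qed
  show ?thesis using ps st mg by (auto simp: Pi_F_def)
qed

lemma spa_diag:
  assumes N: "N \<ge> 3"
  shows "(\<Sum>i<N. spa_t N (diag N x) i) = real N * ph N x"
proof -
  have img: "diag N x ` {..<N} = {x}"
  proof
    show "diag N x ` {..<N} \<subseteq> {x}" by (auto simp: diag_def)
    have "x = diag N x 0" using N by (simp add: diag_def)
    moreover have "(0::nat) \<in> {..<N}" using N by simp
    ultimately show "{x} \<subseteq> diag N x ` {..<N}" by blast
  qed
  have tv: "top_val N (diag N x) = x" by (simp add: top_val_def img)
  have nt: "n_top N (diag N x) = N"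
  proof -
    have "{j. j < N \<and> diag N x j = top_val N (diag N x)} = {..<N}" using tv by (auto simp: diag_def)
    then show ?thesis by (simp add: n_top_def)
  qed
  have "spa_t N (diag N x) i = x powr aN N / real N" if "i < N" for i
    using that tv nt N by (simp add: spa_t_def diag_def aN_def)
  then have "(\<Sum>i<N. spa_t N (diag N x) i) = (\<Sum>i<N. x powr aN N / real N)" by (intro sum.cong) auto
  also have "\<dots> = real N * ph N x" by (simp add: ph_def)
  finally show ?thesis .
qed

lemma spa_rev:
  assumes N: "N \<ge> 3" and F: "cdf_on_unit_with_full_support F"
  shows "revenue N (spa_t N) (pi0 N F) \<le> real N * integral\<^sup>L (interval_measure F) (ph N)"
proof (cases "integrable (pi0 N F) (\<lambda>v. \<Sum>i<N. spa_t N v i)")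
  case True
  have "(\<lambda>v. \<Sum>i<N. spa_t N v i) \<in> borel_measurable (pi0 N F)" using True by (rule borel_measurable_integrable)
  then have gm: "(\<lambda>v. \<Sum>i<N. spa_t N v i) \<in> borel_measurable (profile_space N)"
    by (simp add: pi0_def)
  have "revenue N (spa_t N) (pi0 N F) = integral\<^sup>L (interval_measure F) (\<lambda>x. \<Sum>i<N. spa_t N (diag N x) i)"
    unfolding revenue_def pi0_def by (rule integral_distr[OF diag_meas' gm])
  also have "\<dots> = integral\<^sup>L (interval_measure F) (\<lambda>x. real N * ph N x)" using spa_diag[OF N] by simp
  also have "\<dots> = real N * integral\<^sup>L (interval_measure F) (ph N)" by simp
  finally show ?thesis by simp
next
  case False
  then have "revenue N (spa_t N) (pi0 N F) = 0" by (simp add: revenue_def not_integrable_integral_eq)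
  moreover have "0 \<le> integral\<^sup>L (interval_measure F) (ph N)" by (rule Bochner_Integration.integral_nonneg) (simp add: ph_def)
  ultimately show ?thesis by simp
qed

lemma mu_integrable:
  fixes N :: nat
  assumes N: "N \<ge> 3" and F: "cdf_on_unit_with_full_support F" and g: "g \<in> borel_measurable borel"
    and B: "\<And>x. 0 \<le> x \<Longrightarrow> x \<le> 1 \<Longrightarrow> \<bar>g x\<bar> \<le> (B::real)"
  shows "integrable (interval_measure F) g"
proof -
  have pi: "pi0 N F \<in> Pi_F N F" using pi0_in[OF F] .
  have N0: "0 < N" using N by simp
  have "integrable (pi0 N F) (\<lambda>v. g (v 0))" using int_comp(1)[OF F pi N0 g B] by blast
  then have "integrable (distr (pi0 N F) borel (\<lambda>v. v 0)) g"
    using integrable_distr_eq[OF PiF_coord_meas[OF pi N0] g] by simp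
  then show ?thesis using PiF_marg[OF F pi N0] by simp
qed

lemma et_integral:
  assumes N: "N \<ge> 3" and F: "cdf_on_unit_with_full_support F" and dl: "0 < dl" "dl \<le> 1/8"
  shows "integral\<^sup>L (interval_measure F) (et N dl)
     = bb N dl * (F (1/2) - F dl) - dl powr aN N / real N * (F dl - F 0)"
proof -
  interpret real_distribution "interval_measure F" using muF(1)[OF F] .
  let ?A = "{dl<..1/2::real}" and ?B = "{0<..dl::real}"
  have e: "et N dl = (\<lambda>x. bb N dl * indicator ?A x - dl powr aN N / real N * indicator ?B x)"
    using dl by (auto simp: et_def fun_eq_iff indicator_def)
  have iA: "integrable (interval_measure F) (indicator ?A :: real \<Rightarrow> real)"
    by (intro integrable_real_indicator) (auto simp: emeasure_eq_measure)
  have iB: "integrable (interval_measure F) (indicator ?B :: real \<Rightarrow> real)"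
    by (intro integrable_real_indicator) (auto simp: emeasure_eq_measure)
  have mA: "measure (interval_measure F) ?A = F (1/2) - F dl"
    using measure_interval_measure_Ioc[of dl "1/2" F] cdfF_props(1,2)[OF F] dl by auto
  have mB: "measure (interval_measure F) ?B = F dl - F 0"
    using measure_interval_measure_Ioc[of 0 dl F] cdfF_props(1,2)[OF F] dl by auto
  show ?thesis unfolding e using iA iB mA mB by simp
qed

lemma exists_dl:
  assumes N: "N \<ge> 3" and F: "cdf_on_unit_with_full_support F"
  shows "\<exists>dl. 0 < dl \<and> dl \<le> 1/8 \<and> 0 < bb N dl * (F (1/2) - F dl) - dl powr aN N / real N * (F dl - F 0)"
proof -
  note Fp = cdfF_props[OF F]
  define D where "D = F (1/2) - F (1/8)"
  have D: "0 < D"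
  proof -
    have "F (5/16 - 3/16) < F (5/16 + 3/16)" using Fp(7)[of "5/16" "3/16"] by simp
    then show ?thesis by (simp add: D_def)
  qed
  define eps where "eps = D / (64 * real N * (real N - 1))"
  have eps: "0 < eps" using D N by (simp add: eps_def)
  have "(F \<longlongrightarrow> F 0) (at_right 0)" using Fp(2)[of 0] by (simp add: continuous_within)
  then have "eventually (\<lambda>y. dist (F y) (F 0) < eps) (at_right 0)" using eps by (rule tendstoD)
  then obtain b where b: "b > 0" "\<And>y. 0 < y \<Longrightarrow> y < b \<Longrightarrow> dist (F y) (F 0) < eps"
    unfolding eventually_at_right_field by auto
  define dl where "dl = min (b / 2) (1/8)"
  have dl: "0 < dl" "dl \<le> 1/8" "dl < b" using b by (auto simp: dl_def)
  have c1: "F dl - F 0 < eps" using b(2)[OF dl(1) dl(3)] Fp(1)[of 0 dl] dl by (simp add: dist_real_def)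
  have c0: "0 \<le> F dl - F 0" using Fp(1)[of 0 dl] dl by simp
  have c2: "D \<le> F (1/2) - F dl" using Fp(1)[of dl "1/8"] dl by (simp add: D_def)
  let ?d = "dl powr aN N"
  have d: "0 < ?d" using dl by simp
  have N1: "real N - 1 > 0" "real N > 0" using N by auto
  have "bb N dl * (F (1/2) - F dl) \<ge> bb N dl * D" using c2 bb_facts(1)[OF N dl(1)] dl by (intro mult_left_mono) auto
  moreover have "?d / real N * (F dl - F 0) \<le> ?d / real N * eps" using c1 c0 d N1 by (intro mult_left_mono) auto
  moreover have "?d / real N * eps < bb N dl * D"
  proof -
    have "?d / real N * eps = ?d * D / (64 * real N * real N * (real N - 1))" by (simp add: eps_def field_simps)
    also have "\<dots> < ?d * D / (32 * real N * real N * (real N - 1))"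
      using d D N1 by (intro divide_strict_left_mono) (auto intro!: mult_pos_pos)
    also have "\<dots> = bb N dl * D" by (simp add: bb_def)
    finally show ?thesis .
  qed
  ultimately show ?thesis using dl by (intro exI[of _ dl]) auto
qed

theorem corollary2:
  fixes N :: nat and F :: "real \<Rightarrow> real"
  assumes "N \<ge> 3"
    and "cdf_on_unit_with_full_support F"
  shows "\<exists>q t. admissible N q t \<and>
           (\<forall>\<pi>\<in>Pi_F N F. integrable \<pi> (\<lambda>v. \<Sum>i<N. t v i)) \<and>
           worst_revenue N F t > worst_revenue N F (spa_t N)"
proof -
  note N = assms(1) and F = assms(2)
  obtain dl where dl: "0 < dl" "dl \<le> 1/8"
    and pos: "0 < bb N dl * (F (1/2) - F dl) - dl powr aN N / real N * (F dl - F 0)"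
    using exists_dl[OF N F] by blast
  have dl1: "dl \<le> 1" using dl by simp
  have adm: "admissible N (mq N dl) (mt N dl)"
    unfolding admissible_def
    using mech_feasible[OF N dl(1) dl1] mech_DSIC[OF N dl(1) dl1] mech_EPIR[OF N dl(1) dl1] meas_mq meas_mt
    by blast
  have intg: "\<forall>\<pi>\<in>Pi_F N F. integrable \<pi> (\<lambda>v. \<Sum>i<N. mt N dl v i)"
    using rev_lower(1)[OF N dl F] by blast
  define I0 where "I0 = integral\<^sup>L (interval_measure F) (ph N)"
  define E0 where "E0 = integral\<^sup>L (interval_measure F) (et N dl)"
  have E0: "0 < E0" using et_integral[OF N F dl] pos by (simp add: E0_def)
  have iph: "integrable (interval_measure F) (ph N)"
    by (rule mu_integrable[OF N F ph_meas]) (rule ph_bound[OF N])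
  have iet: "integrable (interval_measure F) (et N dl)"
    by (rule mu_integrable[OF N F et_meas]) (rule et_bound[OF N dl(1) dl1])
  have split: "integral\<^sup>L (interval_measure F) (\<lambda>x. ph N x + et N dl x) = I0 + E0"
    unfolding I0_def E0_def using iph iet by simp
  have low: "real N * (I0 + E0) \<le> revenue N (mt N dl) \<pi>" if "\<pi> \<in> Pi_F N F" for \<pi>
    using rev_lower(2)[OF N dl F that] split by simp
  have W1: "ereal (real N * (I0 + E0)) \<le> worst_revenue N F (mt N dl)"
    unfolding worst_revenue_def by (rule INF_greatest) (use low in simp)
  have W2: "worst_revenue N F (spa_t N) \<le> ereal (real N * I0)"
    unfolding worst_revenue_def
    by (rule INF_lower2[OF pi0_in[OF F]]) (use spa_rev[OF N F] I0_def in simp)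
  have strict: "real N * I0 < real N * (I0 + E0)" using E0 N by simp
  have s2: "ereal (real N * I0) < ereal (real N * (I0 + E0))" using strict by simp
  have "worst_revenue N F (spa_t N) < worst_revenue N F (mt N dl)"
    using le_less_trans[OF W2 less_le_trans[OF s2 W1]] .
  then show ?thesis using adm intg by blast
qed

end
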